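(* Let $G$ be a finite group, let $T$ be a $G$-Tambara functor, and let $k$ be an integer (viewed as an element of each ring $T(G/H)$ via the unique ring homomorphism $\mathbb{Z} \to T(G/H)$). The following are equivalent: (1) $k$ is a unit in $T(G/G)$; (2) $k$ is a unit in $T(G/H)$ for every subgroup $H \leq G$; (3) $k$ is a unit in $T(G/e)$, where $e$ is the trivial subgroup.
   Context: For a finite group $G$, a $G$-Tambara functor $T$ (in the sense of Tambara) consists of a commutative ring $T(G/H)$ for each subgroup $H \leq G$, together with, for each inclusion $H \leq K$ of subgroups, a ring homomorphism $\mathrm{res}^K_H : T(G/K) \to T(G/H)$ (restriction), an additive group homomorphism $\mathrm{tr}^K_H : T(G/H) \to T(G/K)$ (transfer), and a multiplicative monoid homomorphism $\mathrm{nm}^K_H : T(G/H) \to T(G/K)$ (norm), and, for each $g \in G$ and $H \leq G$, a ring isomorphism $c_{g,H} : T(G/H) \to T(G/gHg^{-1})$ (conjugation), satisfying the standard Tambara functor axioms (equivalently, $T$ is a product-preserving functor from Tambara's category of bispans of finite $G$-sets to sets, with $T(G/H)$ its value on the orbit $G/H$). *)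

theory Defs
  imports "HOL-Algebra.Algebra" "HOL-Library.FuncSet"
begin

text \<open>Finite G-sets are modelled as finite G-invariant subsets of the universe
  nat \<times> 'g set, on which G acts by left translation of the second component.
  Every finite G-set is isomorphic to one of these (disjoint union of coset spaces G/H,
  distinguished by the nat tag).\<close>

type_synonym 'g gpt = "nat \<times> 'g set"

definition gact :: "('g, 'b) monoid_scheme \<Rightarrow> 'g \<Rightarrow> 'g gpt \<Rightarrow> 'g gpt" where
  "gact G g x = (fst x, l_coset G g (snd x))"

definition gset :: "('g, 'b) monoid_scheme \<Rightarrow> 'g gpt set \<Rightarrow> bool" where
  "gset G U \<longleftrightarrow> finite U \<and> (\<forall>x\<in>U. snd x \<subseteq> carrier G)
     \<and> (\<forall>g\<in>carrier G. \<forall>x\<in>U. gact G g x \<in> U)"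

definition gmap :: "('g, 'b) monoid_scheme \<Rightarrow> 'g gpt set \<Rightarrow> 'g gpt set
    \<Rightarrow> ('g gpt \<Rightarrow> 'g gpt) \<Rightarrow> bool" where
  "gmap G U Y f \<longleftrightarrow> gset G U \<and> gset G Y \<and> f \<in> U \<rightarrow>\<^sub>E Y
     \<and> (\<forall>g\<in>carrier G. \<forall>x\<in>U. f (gact G g x) = gact G g (f x))"

definition is_pullback :: "('g, 'b) monoid_scheme \<Rightarrow> 'g gpt set \<Rightarrow> 'g gpt set \<Rightarrow> 'g gpt set
    \<Rightarrow> 'g gpt set \<Rightarrow> ('g gpt \<Rightarrow> 'g gpt) \<Rightarrow> ('g gpt \<Rightarrow> 'g gpt)
    \<Rightarrow> ('g gpt \<Rightarrow> 'g gpt) \<Rightarrow> ('g gpt \<Rightarrow> 'g gpt) \<Rightarrow> bool" where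
  "is_pullback G U Y Z W f g q h \<longleftrightarrow>
     gmap G U Y f \<and> gmap G Z Y g \<and> gmap G W U q \<and> gmap G W Z h
     \<and> (\<forall>w\<in>W. f (q w) = g (h w))
     \<and> bij_betw (\<lambda>w. (q w, h w)) W {(x, z). x \<in> U \<and> z \<in> Z \<and> f x = g z}"

text \<open>Exponential diagram (Tambara): for f : U \<rightarrow> Y and p : A \<rightarrow> U, the diagram
  Y <-g- Z <-h- W -e-> A -p-> U  (with q = p o e : W \<rightarrow> U) is isomorphic to the
  canonical one Y <- \<Pi>_f A <- U \<times>_Y \<Pi>_f A -> A, i.e. W is the pullback of f and g,
  p o e = q, and z \<mapsto> (g z, x \<mapsto> e(x,z)) is a bijection Z \<rightarrow> \<Pi>_f A.\<close>
definition is_exponential :: "('g, 'b) monoid_scheme \<Rightarrow> 'g gpt set \<Rightarrow> 'g gpt set \<Rightarrow> 'g gpt set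
    \<Rightarrow> 'g gpt set \<Rightarrow> 'g gpt set \<Rightarrow> ('g gpt \<Rightarrow> 'g gpt) \<Rightarrow> ('g gpt \<Rightarrow> 'g gpt)
    \<Rightarrow> ('g gpt \<Rightarrow> 'g gpt) \<Rightarrow> ('g gpt \<Rightarrow> 'g gpt) \<Rightarrow> ('g gpt \<Rightarrow> 'g gpt)
    \<Rightarrow> ('g gpt \<Rightarrow> 'g gpt) \<Rightarrow> bool" where
  "is_exponential G A U Y Z W p f g h q e \<longleftrightarrow>
     gmap G A U p \<and> is_pullback G U Y Z W f g q h \<and> gmap G W A e
     \<and> (\<forall>w\<in>W. p (e w) = q w)
     \<and> bij_betw
         (\<lambda>z. (g z, \<lambda>x\<in>{x\<in>U. f x = g z}. e (THE w. w \<in> W \<and> q w = x \<and> h w = z)))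
         Z
         {(y, s). y \<in> Y \<and> s \<in> {x\<in>U. f x = y} \<rightarrow>\<^sub>E A \<and> (\<forall>x\<in>{x\<in>U. f x = y}. p (s x) = x)}"

text \<open>A G-Tambara functor (Tambara's definition, with ring structure given):
  R U is the commutative ring T(U); for a G-map f : U \<rightarrow> Y,
  res U Y f : T(Y) \<rightarrow> T(U) (restriction f^*), tr U Y f : T(U) \<rightarrow> T(Y) (transfer f_+),
  nm U Y f : T(U) \<rightarrow> T(Y) (norm f_\<bullet>).\<close>
definition tambara_functor :: "('g, 'b) monoid_scheme \<Rightarrow> ('g gpt set \<Rightarrow> 'r ring)
    \<Rightarrow> ('g gpt set \<Rightarrow> 'g gpt set \<Rightarrow> ('g gpt \<Rightarrow> 'g gpt) \<Rightarrow> 'r \<Rightarrow> 'r)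
    \<Rightarrow> ('g gpt set \<Rightarrow> 'g gpt set \<Rightarrow> ('g gpt \<Rightarrow> 'g gpt) \<Rightarrow> 'r \<Rightarrow> 'r)
    \<Rightarrow> ('g gpt set \<Rightarrow> 'g gpt set \<Rightarrow> ('g gpt \<Rightarrow> 'g gpt) \<Rightarrow> 'r \<Rightarrow> 'r) \<Rightarrow> bool" where
  "tambara_functor G R res tr nm \<longleftrightarrow>
     \<comment> \<open>each T(U) is a commutative ring\<close>
     (\<forall>U. gset G U \<longrightarrow> cring (R U))
     \<comment> \<open>restriction: ring homs; transfer: additive; norm: multiplicative monoid homs\<close>
   \<and> (\<forall>U Y f. gmap G U Y f \<longrightarrow>
        res U Y f \<in> ring_hom (R Y) (R U)
      \<and> (\<forall>a\<in>carrier (R U). tr U Y f a \<in> carrier (R Y))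
      \<and> (\<forall>a\<in>carrier (R U). \<forall>b\<in>carrier (R U).
           tr U Y f (a \<oplus>\<^bsub>R U\<^esub> b) = tr U Y f a \<oplus>\<^bsub>R Y\<^esub> tr U Y f b)
      \<and> (\<forall>a\<in>carrier (R U). nm U Y f a \<in> carrier (R Y))
      \<and> (\<forall>a\<in>carrier (R U). \<forall>b\<in>carrier (R U).
           nm U Y f (a \<otimes>\<^bsub>R U\<^esub> b) = nm U Y f a \<otimes>\<^bsub>R Y\<^esub> nm U Y f b)
      \<and> nm U Y f \<one>\<^bsub>R U\<^esub> = \<one>\<^bsub>R Y\<^esub>)
     \<comment> \<open>functoriality: identities\<close>
   \<and> (\<forall>U. gset G U \<longrightarrow> (\<forall>a\<in>carrier (R U).
        res U U (restrict id U) a = a \<and> tr U U (restrict id U) a = a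
      \<and> nm U U (restrict id U) a = a))
     \<comment> \<open>functoriality: composition\<close>
   \<and> (\<forall>U Y Z f g. gmap G U Y f \<longrightarrow> gmap G Y Z g \<longrightarrow>
        (\<forall>c\<in>carrier (R Z). res U Z (compose U g f) c = res U Y f (res Y Z g c))
      \<and> (\<forall>a\<in>carrier (R U). tr U Z (compose U g f) a = tr Y Z g (tr U Y f a))
      \<and> (\<forall>a\<in>carrier (R U). nm U Z (compose U g f) a = nm Y Z g (nm U Y f a)))
     \<comment> \<open>restriction sends coproducts to products (empty coproduct and binary ones)\<close>
   \<and> (\<exists>z. carrier (R {}) = {z})
   \<and> (\<forall>U1 U2. gset G U1 \<longrightarrow> gset G U2 \<longrightarrow> U1 \<inter> U2 = {} \<longrightarrow>
        bij_betw (\<lambda>a. (res U1 (U1 \<union> U2) (restrict id U1) a, res U2 (U1 \<union> U2) (restrict id U2) a))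
          (carrier (R (U1 \<union> U2))) (carrier (R U1) \<times> carrier (R U2)))
     \<comment> \<open>Beck--Chevalley for pullback squares: g^* f_+ = f'_+ g'^*, g^* f_\<bullet> = f'_\<bullet> g'^*\<close>
   \<and> (\<forall>U Y Y' U' f g g' f'. is_pullback G U Y Y' U' f g g' f' \<longrightarrow>
        (\<forall>a\<in>carrier (R U).
           res Y' Y g (tr U Y f a) = tr U' Y' f' (res U' U g' a)
         \<and> res Y' Y g (nm U Y f a) = nm U' Y' f' (res U' U g' a)))
     \<comment> \<open>distributive law for exponential diagrams: f_\<bullet> p_+ = g_+ h_\<bullet> e^*\<close>
   \<and> (\<forall>A U Y Z W p f g h q e. is_exponential G A U Y Z W p f g h q e \<longrightarrow> gmap G U Y f \<longrightarrow>
        (\<forall>a\<in>carrier (R A).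
           nm U Y f (tr A U p a) = tr Z Y g (nm W Z h (res W A e a))))"

definition orbit_set :: "('g, 'b) monoid_scheme \<Rightarrow> 'g set \<Rightarrow> 'g gpt set" where
  "orbit_set G H = {(0, l_coset G g H) | g. g \<in> carrier G}"

definition int_elem :: "'r ring \<Rightarrow> int \<Rightarrow> 'r" where
  "int_elem S k = add_pow S k (one S)"

end

theory Submission
  imports Defs "HOL-Library.Countable_Set"
begin

locale tamb = group G for G :: "('g,'b) monoid_scheme" (structure) +
  fixes R :: "'g gpt set \<Rightarrow> 'r ring"
    and res tr nm :: "'g gpt set \<Rightarrow> 'g gpt set \<Rightarrow> ('g gpt \<Rightarrow> 'g gpt) \<Rightarrow> 'r \<Rightarrow> 'r"
  assumes fin: "finite (carrier G)" and T: "tambara_functor G R res tr nm"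
begin

lemmas TT = T[unfolded tambara_functor_def]
lemmas T1 = TT[THEN conjunct1]
lemmas T2 = TT[THEN conjunct2, THEN conjunct1]
lemmas T3 = TT[THEN conjunct2, THEN conjunct2, THEN conjunct1]
lemmas T4 = TT[THEN conjunct2, THEN conjunct2, THEN conjunct2, THEN conjunct1]
lemmas T5 = TT[THEN conjunct2, THEN conjunct2, THEN conjunct2, THEN conjunct2, THEN conjunct1]
lemmas T6 = TT[THEN conjunct2, THEN conjunct2, THEN conjunct2, THEN conjunct2, THEN conjunct2, THEN conjunct1]
lemmas T7 = TT[THEN conjunct2, THEN conjunct2, THEN conjunct2, THEN conjunct2, THEN conjunct2, THEN conjunct2, THEN conjunct1]
lemmas T8 = TT[THEN conjunct2, THEN conjunct2, THEN conjunct2, THEN conjunct2, THEN conjunct2, THEN conjunct2, THEN conjunct2]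

lemma cr: "gset G U \<Longrightarrow> cring (R U)" using T1 by blast

lemma ax1: "gmap G U Y f \<Longrightarrow> res U Y f \<in> ring_hom (R Y) (R U)
      \<and> (\<forall>a\<in>carrier (R U). tr U Y f a \<in> carrier (R Y))
      \<and> (\<forall>a\<in>carrier (R U). \<forall>b\<in>carrier (R U).
           tr U Y f (a \<oplus>\<^bsub>R U\<^esub> b) = tr U Y f a \<oplus>\<^bsub>R Y\<^esub> tr U Y f b)
      \<and> (\<forall>a\<in>carrier (R U). nm U Y f a \<in> carrier (R Y))
      \<and> (\<forall>a\<in>carrier (R U). \<forall>b\<in>carrier (R U).
           nm U Y f (a \<otimes>\<^bsub>R U\<^esub> b) = nm U Y f a \<otimes>\<^bsub>R Y\<^esub> nm U Y f b)
      \<and> nm U Y f \<one>\<^bsub>R U\<^esub> = \<one>\<^bsub>R Y\<^esub>"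
  using T2 by blast

lemma res_hom: "gmap G U Y f \<Longrightarrow> res U Y f \<in> ring_hom (R Y) (R U)" using ax1 by blast
lemma tr_closed: "gmap G U Y f \<Longrightarrow> a \<in> carrier (R U) \<Longrightarrow> tr U Y f a \<in> carrier (R Y)" using ax1 by blast
lemma tr_add: "gmap G U Y f \<Longrightarrow> a \<in> carrier (R U) \<Longrightarrow> b \<in> carrier (R U) \<Longrightarrow>
   tr U Y f (a \<oplus>\<^bsub>R U\<^esub> b) = tr U Y f a \<oplus>\<^bsub>R Y\<^esub> tr U Y f b" using ax1 by blast
lemma nm_closed: "gmap G U Y f \<Longrightarrow> a \<in> carrier (R U) \<Longrightarrow> nm U Y f a \<in> carrier (R Y)" using ax1 by blast
lemma nm_mult: "gmap G U Y f \<Longrightarrow> a \<in> carrier (R U) \<Longrightarrow> b \<in> carrier (R U) \<Longrightarrow>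
   nm U Y f (a \<otimes>\<^bsub>R U\<^esub> b) = nm U Y f a \<otimes>\<^bsub>R Y\<^esub> nm U Y f b" using ax1 by blast
lemma nm_one: "gmap G U Y f \<Longrightarrow> nm U Y f \<one>\<^bsub>R U\<^esub> = \<one>\<^bsub>R Y\<^esub>" using ax1 by blast

lemma ax_id: "gset G U \<Longrightarrow> a\<in>carrier (R U) \<Longrightarrow>
        res U U (restrict id U) a = a \<and> tr U U (restrict id U) a = a
      \<and> nm U U (restrict id U) a = a"
  using T3 by blast

lemma ax_comp: "gmap G U Y f \<Longrightarrow> gmap G Y Z g \<Longrightarrow>
        (\<forall>c\<in>carrier (R Z). res U Z (compose U g f) c = res U Y f (res Y Z g c))
      \<and> (\<forall>a\<in>carrier (R U). tr U Z (compose U g f) a = tr Y Z g (tr U Y f a))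
      \<and> (\<forall>a\<in>carrier (R U). nm U Z (compose U g f) a = nm Y Z g (nm U Y f a))"
  using T4 by blast

lemma ax_empty: "\<exists>z. carrier (R {}) = {z}"
  using T5 by blast

lemma ax_coprod: "gset G U1 \<Longrightarrow> gset G U2 \<Longrightarrow> U1 \<inter> U2 = {} \<Longrightarrow>
        bij_betw (\<lambda>a. (res U1 (U1 \<union> U2) (restrict id U1) a, res U2 (U1 \<union> U2) (restrict id U2) a))
          (carrier (R (U1 \<union> U2))) (carrier (R U1) \<times> carrier (R U2))"
  using T6 by blast

lemma ax_bc: "is_pullback G U Y Y' U' f g g' f' \<Longrightarrow> a\<in>carrier (R U) \<Longrightarrow>
           res Y' Y g (tr U Y f a) = tr U' Y' f' (res U' U g' a)
         \<and> res Y' Y g (nm U Y f a) = nm U' Y' f' (res U' U g' a)"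
  using T7 by blast

lemma ax_dist: "is_exponential G A U Y Z W p f g h q e \<Longrightarrow> gmap G U Y f \<Longrightarrow>
        a\<in>carrier (R A) \<Longrightarrow>
           nm U Y f (tr A U p a) = tr Z Y g (nm W Z h (res W A e a))"
  using T8 by blast


lemma gact_mult: "g \<in> carrier G \<Longrightarrow> h \<in> carrier G \<Longrightarrow> snd x \<subseteq> carrier G \<Longrightarrow>
   gact G g (gact G h x) = gact G (g \<otimes> h) x"
  by (simp add: gact_def lcos_m_assoc)
lemma gact_one: "snd x \<subseteq> carrier G \<Longrightarrow> gact G \<one> x = x"
  by (simp add: gact_def lcos_mult_one)
lemma gact_carrier: "g \<in> carrier G \<Longrightarrow> snd x \<subseteq> carrier G \<Longrightarrow> snd (gact G g x) \<subseteq> carrier G"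
  by (simp add: gact_def l_coset_subset_G)
lemma fst_gact[simp]: "fst (gact G g x) = fst x" by (simp add: gact_def)
lemma snd_gact: "snd (gact G g x) = g <# snd x" by (simp add: gact_def)
lemma gact_inv: "g \<in> carrier G \<Longrightarrow> snd x \<subseteq> carrier G \<Longrightarrow> gact G (inv g) (gact G g x) = x"
  by (simp add: gact_mult gact_one)
lemma gact_inv2: "g \<in> carrier G \<Longrightarrow> snd x \<subseteq> carrier G \<Longrightarrow> gact G g (gact G (inv g) x) = x"
  by (simp add: gact_mult gact_one)
lemma gact_inj: "g \<in> carrier G \<Longrightarrow> snd x \<subseteq> carrier G \<Longrightarrow> snd y \<subseteq> carrier G \<Longrightarrow>
   gact G g x = gact G g y \<Longrightarrow> x = y"
  by (metis gact_inv)

lemma gsetD: "gset G U \<Longrightarrow> x \<in> U \<Longrightarrow> snd x \<subseteq> carrier G"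
  "gset G U \<Longrightarrow> x \<in> U \<Longrightarrow> g \<in> carrier G \<Longrightarrow> gact G g x \<in> U"
  "gset G U \<Longrightarrow> finite U"
  by (auto simp: gset_def)

lemma gset_empty: "gset G {}" by (simp add: gset_def)
lemma gset_Un: "gset G A \<Longrightarrow> gset G B \<Longrightarrow> gset G (A \<union> B)" by (auto simp: gset_def)
lemma gset_Diff: "gset G A \<Longrightarrow> gset G B \<Longrightarrow> gset G (A - B)"
  unfolding gset_def by (metis DiffD1 DiffD2 DiffI finite_Diff gact_inv inv_closed)

lemma gmapD: "gmap G U Y f \<Longrightarrow> gset G U" "gmap G U Y f \<Longrightarrow> gset G Y"
  "gmap G U Y f \<Longrightarrow> x \<in> U \<Longrightarrow> f x \<in> Y"
  "gmap G U Y f \<Longrightarrow> x \<notin> U \<Longrightarrow> f x = undefined"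
  "gmap G U Y f \<Longrightarrow> g \<in> carrier G \<Longrightarrow> x \<in> U \<Longrightarrow> f (gact G g x) = gact G g (f x)"
  unfolding gmap_def by (auto intro: PiE_mem PiE_arb)

lemma gmapI: "gset G U \<Longrightarrow> gset G Y \<Longrightarrow> (\<And>x. x \<in> U \<Longrightarrow> f x \<in> Y) \<Longrightarrow>
  (\<And>x. x \<notin> U \<Longrightarrow> f x = undefined) \<Longrightarrow>
  (\<And>g x. g \<in> carrier G \<Longrightarrow> x \<in> U \<Longrightarrow> f (gact G g x) = gact G g (f x)) \<Longrightarrow> gmap G U Y f"
  unfolding gmap_def by (auto simp: PiE_def Pi_def extensional_def)

lemma incl_gmap: "gset G V \<Longrightarrow> gset G V' \<Longrightarrow> V' \<subseteq> V \<Longrightarrow> gmap G V' V (restrict id V')"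
  by (rule gmapI) (auto simp: gset_def)
lemma id_gmap: "gset G V \<Longrightarrow> gmap G V V (restrict id V)"
  by (rule incl_gmap) auto
lemma gmap_restrict: assumes "gmap G V Y f" "gset G V'" "V' \<subseteq> V" shows "gmap G V' Y (restrict f V')"
  by (rule gmapI) (use assms gmapD[OF assms(1)] gsetD[OF assms(2)] in auto)
lemma gmap_cod: assumes "gmap G V Y f" "gset G Y'" "f ` V \<subseteq> Y'" shows "gmap G V Y' f"
  by (rule gmapI) (use assms gmapD[OF assms(1)] in auto)
lemma gmap_comp: assumes "gmap G V Y f" "gmap G Y Z g" shows "gmap G V Z (compose V g f)"
  by (rule gmapI) (use assms gmapD[OF assms(1)] gmapD[OF assms(2)] gsetD[OF gmapD(1)[OF assms(1)]] in \<open>auto simp: compose_def\<close>)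

lemma ring_add_pow_Suc: "ring S \<Longrightarrow> add_pow (S) (Suc n) (x) = add_pow (S) (n) (x) \<oplus>\<^bsub>S\<^esub> x"
proof - assume "ring S" then interpret ring S . show ?thesis by (rule add.nat_pow_Suc) qed
lemma ring_add_pow_0: "ring S \<Longrightarrow> add_pow (S) ((0::nat)) (x) = \<zero>\<^bsub>S\<^esub>"
proof - assume "ring S" then interpret ring S . show ?thesis by (rule add.nat_pow_0) qed
lemma ring_add_pow_closed: "ring S \<Longrightarrow> x \<in> carrier S \<Longrightarrow> add_pow (S) ((n::nat)) (x) \<in> carrier S"
proof - assume "ring S" then interpret ring S . show "x \<in> carrier S \<Longrightarrow> ?thesis" by simp qed

lemma tr_zero: assumes "gmap G U Y f" shows "tr U Y f \<zero>\<^bsub>R U\<^esub> = \<zero>\<^bsub>R Y\<^esub>"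
proof -
  interpret U: cring "R U" using cr gmapD(1)[OF assms] .
  interpret Y: cring "R Y" using cr gmapD(2)[OF assms] .
  have c: "tr U Y f \<zero>\<^bsub>R U\<^esub> \<in> carrier (R Y)" using tr_closed[OF assms] by simp
  have "tr U Y f \<zero>\<^bsub>R U\<^esub> = tr U Y f \<zero>\<^bsub>R U\<^esub> \<oplus>\<^bsub>R Y\<^esub> tr U Y f \<zero>\<^bsub>R U\<^esub>"
    using tr_add[OF assms, of "\<zero>\<^bsub>R U\<^esub>" "\<zero>\<^bsub>R U\<^esub>"] by simp
  then show ?thesis using c Y.add.l_cancel_one'[OF Y.zero_closed c] by simp
qed

lemma tr_add_pow: assumes "gmap G U Y f" "a \<in> carrier (R U)"
  shows "tr U Y f (add_pow (R U) (n::nat) a) = add_pow (R Y) n (tr U Y f a)"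
proof -
  have rU: "ring (R U)" using cring.axioms(1)[OF cr[OF gmapD(1)[OF assms(1)]]] .
  have rY: "ring (R Y)" using cring.axioms(1)[OF cr[OF gmapD(2)[OF assms(1)]]] .
  show ?thesis
  proof (induction n)
    case 0 then show ?case by (simp add: ring_add_pow_0[OF rU] ring_add_pow_0[OF rY] tr_zero[OF assms(1)])
  next
    case (Suc n)
    have "tr U Y f (add_pow (R U) (Suc n) a) = tr U Y f (add_pow (R U) n a \<oplus>\<^bsub>R U\<^esub> a)"
      by (simp add: ring_add_pow_Suc[OF rU])
    also have "\<dots> = tr U Y f (add_pow (R U) n a) \<oplus>\<^bsub>R Y\<^esub> tr U Y f a"
      by (rule tr_add[OF assms(1) ring_add_pow_closed[OF rU assms(2)] assms(2)])
    also have "\<dots> = add_pow (R Y) (Suc n) (tr U Y f a)" by (simp add: Suc ring_add_pow_Suc[OF rY])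
    finally show ?case .
  qed
qed

lemma res_add_pow: assumes "gmap G U Y f"
  shows "res U Y f (add_pow (R Y) (n::nat) \<one>\<^bsub>R Y\<^esub>) = add_pow (R U) n \<one>\<^bsub>R U\<^esub>"
proof -
  have rU: "ring (R U)" using cring.axioms(1)[OF cr[OF gmapD(1)[OF assms(1)]]] .
  have rY: "ring (R Y)" using cring.axioms(1)[OF cr[OF gmapD(2)[OF assms(1)]]] .
  have h: "res U Y f \<in> ring_hom (R Y) (R U)" by (rule res_hom[OF assms])
  show ?thesis
  proof (induction n)
    case 0 then show ?case by (simp add: ring_add_pow_0[OF rU] ring_add_pow_0[OF rY] ring_hom_zero[OF h rY rU])
  next
    case (Suc n)
    have "res U Y f (add_pow (R Y) (Suc n) \<one>\<^bsub>R Y\<^esub>) = res U Y f (add_pow (R Y) n \<one>\<^bsub>R Y\<^esub> \<oplus>\<^bsub>R Y\<^esub> \<one>\<^bsub>R Y\<^esub>)"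
      by (simp add: ring_add_pow_Suc[OF rY])
    also have "\<dots> = res U Y f (add_pow (R Y) n \<one>\<^bsub>R Y\<^esub>) \<oplus>\<^bsub>R U\<^esub> res U Y f \<one>\<^bsub>R Y\<^esub>"
      by (rule ring_hom_add[OF h ring_add_pow_closed[OF rY ring.ring_simprules(6)[OF rY]] ring.ring_simprules(6)[OF rY]])
    also have "\<dots> = add_pow (R U) (Suc n) \<one>\<^bsub>R U\<^esub>" by (simp add: Suc ring_add_pow_Suc[OF rU] ring_hom_one[OF h])
    finally show ?case .
  qed
qed

lemma res_units: assumes "gmap G U Y f" "x \<in> Units (R Y)" shows "res U Y f x \<in> Units (R U)"
proof -
  interpret U: cring "R U" using cr gmapD(1)[OF assms(1)] .
  interpret Y: cring "R Y" using cr gmapD(2)[OF assms(1)] .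
  obtain y where y: "y \<in> carrier (R Y)" "x \<otimes>\<^bsub>R Y\<^esub> y = \<one>\<^bsub>R Y\<^esub>" "x \<in> carrier (R Y)"
    using assms(2) unfolding Units_def by auto
  have h: "res U Y f \<in> ring_hom (R Y) (R U)" by (rule res_hom[OF assms(1)])
  have "res U Y f x \<otimes>\<^bsub>R U\<^esub> res U Y f y = \<one>\<^bsub>R U\<^esub>"
    using ring_hom_mult[OF h y(3) y(1)] ring_hom_one[OF h] y(2) by simp
  moreover have c1: "res U Y f x \<in> carrier (R U)" "res U Y f y \<in> carrier (R U)"
    using ring_hom_closed[OF h] y by auto
  ultimately have "res U Y f y \<otimes>\<^bsub>R U\<^esub> res U Y f x = \<one>\<^bsub>R U\<^esub>" using U.m_comm by simp
  with c1 \<open>res U Y f x \<otimes>\<^bsub>R U\<^esub> res U Y f y = \<one>\<^bsub>R U\<^esub>\<close> show ?thesis unfolding Units_def by blast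
qed

end

context tamb begin

lemma ring_R: "gset G U \<Longrightarrow> ring (R U)" using cring.axioms(1)[OF cr] .

lemma empty_carrier: "carrier (R {}) = {\<zero>\<^bsub>R {}\<^esub>}"
proof -
  obtain z where z: "carrier (R {}) = {z}" using ax_empty by blast
  have "\<zero>\<^bsub>R {}\<^esub> \<in> carrier (R {})" using ring.ring_simprules(2)[OF ring_R[OF gset_empty]] .
  then show ?thesis using z by auto
qed

lemma empty_units: "x \<in> carrier (R {}) \<Longrightarrow> x \<in> Units (R {})"
proof -
  assume x: "x \<in> carrier (R {})"
  have o: "\<one>\<^bsub>R {}\<^esub> \<in> carrier (R {})" using ring.ring_simprules(6)[OF ring_R[OF gset_empty]] .
  have "x = \<one>\<^bsub>R {}\<^esub>" using x o empty_carrier by auto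
  then show ?thesis using monoid.Units_one_closed[OF ring.is_monoid[OF ring_R[OF gset_empty]]] by simp
qed

lemma gset_preimage: assumes "gmap G W Z h" "gset G Z'" shows "gset G {w\<in>W. h w \<in> Z'}"
  using gmapD[OF assms(1)] gsetD[OF assms(2)] gsetD[OF gmapD(1)[OF assms(1)]]
  unfolding gset_def by auto

lemma pb_incl: assumes h: "gmap G W Z h" and Z': "gset G Z'" "Z' \<subseteq> Z"
  shows "is_pullback G W Z Z' {w\<in>W. h w \<in> Z'} h (restrict id Z') (restrict id {w\<in>W. h w \<in> Z'})
     (restrict h {w\<in>W. h w \<in> Z'})"
proof -
  let ?W = "{w\<in>W. h w \<in> Z'}"
  have gW: "gset G ?W" by (rule gset_preimage[OF h Z'(1)])
  have m1: "gmap G Z' Z (restrict id Z')" by (rule incl_gmap[OF gmapD(2)[OF h] Z'])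
  have m2: "gmap G ?W W (restrict id ?W)" by (rule incl_gmap[OF gmapD(1)[OF h] gW]) auto
  have m3: "gmap G ?W Z' (restrict h ?W)"
    by (rule gmap_cod[OF gmap_restrict[OF h gW] Z'(1)]) auto
  have b: "bij_betw (\<lambda>w. (restrict id ?W w, restrict h ?W w)) ?W
     {(x, z). x \<in> W \<and> z \<in> Z' \<and> h x = restrict id Z' z}"
    unfolding bij_betw_def inj_on_def by (auto simp: image_def)
  show ?thesis unfolding is_pullback_def using h m1 m2 m3 b by auto
qed

lemma bc_incl: assumes h: "gmap G W Z h" and Z': "gset G Z'" "Z' \<subseteq> Z" and c: "c \<in> carrier (R W)"
  shows "res Z' Z (restrict id Z') (nm W Z h c) = nm {w\<in>W. h w \<in> Z'} Z' (restrict h {w\<in>W. h w \<in> Z'})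
            (res {w\<in>W. h w \<in> Z'} W (restrict id {w\<in>W. h w \<in> Z'}) c)"
    "res Z' Z (restrict id Z') (tr W Z h c) = tr {w\<in>W. h w \<in> Z'} Z' (restrict h {w\<in>W. h w \<in> Z'})
            (res {w\<in>W. h w \<in> Z'} W (restrict id {w\<in>W. h w \<in> Z'}) c)"
  using ax_bc[OF pb_incl[OF assms(1-3)] c] by auto

lemma pb_self: assumes "gmap G V Y \<phi>" "inj_on \<phi> V"
  shows "is_pullback G V Y V V \<phi> \<phi> (restrict id V) (restrict id V)"
proof -
  have m: "gmap G V V (restrict id V)" by (rule id_gmap[OF gmapD(1)[OF assms(1)]])
  have b: "bij_betw (\<lambda>w. (restrict id V w, restrict id V w)) V {(x, z). x \<in> V \<and> z \<in> V \<and> \<phi> x = \<phi> z}"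
    using assms(2) unfolding bij_betw_def inj_on_def by (auto simp: image_def)
  show ?thesis unfolding is_pullback_def using assms(1) m b by auto
qed

lemma res_tr_inj: assumes "gmap G V Y \<phi>" "inj_on \<phi> V" "a \<in> carrier (R V)"
  shows "res V Y \<phi> (tr V Y \<phi> a) = a"
proof -
  have "res V Y \<phi> (tr V Y \<phi> a) = tr V V (restrict id V) (res V V (restrict id V) a)"
    using ax_bc[OF pb_self[OF assms(1,2)] assms(3)] by auto
  also have "\<dots> = a" using ax_id[OF gmapD(1)[OF assms(1)] assms(3)] by simp
  finally show ?thesis .
qed

lemma iso_tr_res: assumes phi: "gmap G V Y \<phi>" and b: "bij_betw \<phi> V Y" and y: "y \<in> carrier (R Y)"
  shows "tr V Y \<phi> (res V Y \<phi> y) = y"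
proof -
  let ?\<psi> = "restrict (inv_into V \<phi>) Y"
  have gV: "gset G V" and gY: "gset G Y" using gmapD[OF phi] by auto
  have inv1: "\<And>x. x \<in> V \<Longrightarrow> inv_into V \<phi> (\<phi> x) = x" using b bij_betw_inv_into_left by metis
  have inv2: "\<And>z. z \<in> Y \<Longrightarrow> \<phi> (inv_into V \<phi> z) = z" using b bij_betw_inv_into_right by metis
  have inv3: "\<And>z. z \<in> Y \<Longrightarrow> inv_into V \<phi> z \<in> V" using b bij_betw_imp_surj_on inv_into_into by metis
  have psi: "gmap G Y V ?\<psi>"
  proof (rule gmapI[OF gY gV])
    fix g z assume g: "g \<in> carrier G" and z: "z \<in> Y"
    have "gact G g (inv_into V \<phi> z) \<in> V" using gsetD(2)[OF gV inv3[OF z] g] .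
    moreover have "\<phi> (gact G g (inv_into V \<phi> z)) = gact G g z"
      using gmapD(5)[OF phi g inv3[OF z]] inv2[OF z] by simp
    ultimately have "inv_into V \<phi> (gact G g z) = gact G g (inv_into V \<phi> z)"
      using inv1 by metis
    then show "?\<psi> (gact G g z) = gact G g (?\<psi> z)" using z gsetD(2)[OF gY z g] by simp
  qed (use inv3 in auto)
  have c1: "compose V ?\<psi> \<phi> = restrict id V"
    by (rule ext) (auto simp: compose_def inv1 gmapD(3)[OF phi])
  have c2: "compose Y \<phi> ?\<psi> = restrict id Y"
    by (rule ext) (auto simp: compose_def inv2)
  have hom: "res V Y \<phi> \<in> ring_hom (R Y) (R V)" by (rule res_hom[OF phi])
  have inj: "\<And>u v. u \<in> carrier (R Y) \<Longrightarrow> v \<in> carrier (R Y) \<Longrightarrow> res V Y \<phi> u = res V Y \<phi> v \<Longrightarrow> u = v"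
  proof -
    fix u v assume u: "u \<in> carrier (R Y)" and v: "v \<in> carrier (R Y)" and e: "res V Y \<phi> u = res V Y \<phi> v"
    have "u = res Y Y (compose Y \<phi> ?\<psi>) u" using c2 ax_id[OF gY u] by simp
    also have "\<dots> = res Y V ?\<psi> (res V Y \<phi> u)" using ax_comp[OF psi phi] u by blast
    also have "\<dots> = res Y V ?\<psi> (res V Y \<phi> v)" using e by simp
    also have "\<dots> = res Y Y (compose Y \<phi> ?\<psi>) v" using ax_comp[OF psi phi] v by metis
    also have "\<dots> = v" using c2 ax_id[OF gY v] by simp
    finally show "u = v" .
  qed
  have ry: "res V Y \<phi> y \<in> carrier (R V)" using ring_hom_closed[OF hom y] .
  have "res V Y \<phi> (tr V Y \<phi> (res V Y \<phi> y)) = res V Y \<phi> y"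
    by (rule res_tr_inj[OF phi bij_betw_imp_inj_on[OF b] ry])
  then show ?thesis using inj tr_closed[OF phi ry] y by blast
qed

lemma pb_disj: assumes "gset G U1" "gset G U2" "U1 \<inter> U2 = {}"
  shows "is_pullback G U2 (U1 \<union> U2) U1 {} (restrict id U2) (restrict id U1) (\<lambda>_. undefined) (\<lambda>_. undefined)"
proof -
  have m1: "gmap G U2 (U1 \<union> U2) (restrict id U2)" by (rule incl_gmap[OF gset_Un[OF assms(1,2)] assms(2)]) auto
  have m2: "gmap G U1 (U1 \<union> U2) (restrict id U1)" by (rule incl_gmap[OF gset_Un[OF assms(1,2)] assms(1)]) auto
  have m3: "gmap G {} U2 (\<lambda>_. undefined)" by (rule gmapI[OF gset_empty assms(2)]) auto
  have m4: "gmap G {} U1 (\<lambda>_. undefined)" by (rule gmapI[OF gset_empty assms(1)]) auto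
  have e: "{(x, z). x \<in> U2 \<and> z \<in> U1 \<and> restrict id U2 x = restrict id U1 z} = {}" using assms(3) by auto
  show ?thesis unfolding is_pullback_def using m1 m2 m3 m4 e by (simp add: bij_betw_def)
qed

lemma res_tr_disj: assumes "gset G U1" "gset G U2" "U1 \<inter> U2 = {}" "a \<in> carrier (R U2)"
  shows "res U1 (U1 \<union> U2) (restrict id U1) (tr U2 (U1 \<union> U2) (restrict id U2) a) = \<zero>\<^bsub>R U1\<^esub>"
proof -
  have m4: "gmap G {} U1 (\<lambda>_. undefined)" by (rule gmapI[OF gset_empty assms(1)]) auto
  have "res U1 (U1 \<union> U2) (restrict id U1) (tr U2 (U1 \<union> U2) (restrict id U2) a)
     = tr {} U1 (\<lambda>_. undefined) (res {} U2 (\<lambda>_. undefined) a)"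
    using ax_bc[OF pb_disj[OF assms(1-3)] assms(4)] by auto
  moreover have "res {} U2 (\<lambda>_. undefined) a = \<zero>\<^bsub>R {}\<^esub>"
  proof -
    have m3: "gmap G {} U2 (\<lambda>_. undefined)" by (rule gmapI[OF gset_empty assms(2)]) auto
    show ?thesis using ring_hom_closed[OF res_hom[OF m3] assms(4)] empty_carrier by auto
  qed
  ultimately show ?thesis using tr_zero[OF m4] by simp
qed

lemma coprod_inj: assumes "gset G U1" "gset G U2" "U1 \<inter> U2 = {}"
  "x \<in> carrier (R (U1 \<union> U2))" "y \<in> carrier (R (U1 \<union> U2))"
  "res U1 (U1 \<union> U2) (restrict id U1) x = res U1 (U1 \<union> U2) (restrict id U1) y"
  "res U2 (U1 \<union> U2) (restrict id U2) x = res U2 (U1 \<union> U2) (restrict id U2) y"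
  shows "x = y"
  using ax_coprod[OF assms(1-3)] assms(4-7) unfolding bij_betw_def inj_on_def by auto

lemma coprod_surj: assumes "gset G U1" "gset G U2" "U1 \<inter> U2 = {}"
  "a1 \<in> carrier (R U1)" "a2 \<in> carrier (R U2)"
  shows "\<exists>x\<in>carrier (R (U1 \<union> U2)). res U1 (U1 \<union> U2) (restrict id U1) x = a1 \<and>
     res U2 (U1 \<union> U2) (restrict id U2) x = a2"
proof -
  have "(a1, a2) \<in> (\<lambda>a. (res U1 (U1 \<union> U2) (restrict id U1) a, res U2 (U1 \<union> U2) (restrict id U2) a)) `
     carrier (R (U1 \<union> U2))"
    using ax_coprod[OF assms(1-3)] assms(4,5) unfolding bij_betw_def by auto
  then show ?thesis by auto
qed


lemma compose_incl: "V' \<subseteq> V \<Longrightarrow> compose V' f (restrict id V') = restrict f V'"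
  by (rule ext) (auto simp: compose_def)

lemma tr_decomp: assumes g1: "gset G U1" and g2: "gset G U2" and d: "U1 \<inter> U2 = {}"
  and f: "gmap G (U1 \<union> U2) Y f" and x: "x \<in> carrier (R (U1 \<union> U2))"
  shows "tr (U1 \<union> U2) Y f x = tr U1 Y (restrict f U1) (res U1 (U1 \<union> U2) (restrict id U1) x)
     \<oplus>\<^bsub>R Y\<^esub> tr U2 Y (restrict f U2) (res U2 (U1 \<union> U2) (restrict id U2) x)"
proof -
  let ?V = "U1 \<union> U2" let ?i1 = "restrict id U1" let ?i2 = "restrict id U2"
  have gV: "gset G ?V" using gset_Un[OF g1 g2] .
  have m1: "gmap G U1 ?V ?i1" by (rule incl_gmap[OF gV g1]) auto
  have m2: "gmap G U2 ?V ?i2" by (rule incl_gmap[OF gV g2]) auto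
  interpret V: cring "R ?V" using cr[OF gV] .
  interpret U1: cring "R U1" using cr[OF g1] .
  interpret U2: cring "R U2" using cr[OF g2] .
  define a1 where "a1 = res U1 ?V ?i1 x"
  define a2 where "a2 = res U2 ?V ?i2 x"
  have a1: "a1 \<in> carrier (R U1)" unfolding a1_def using ring_hom_closed[OF res_hom[OF m1] x] .
  have a2: "a2 \<in> carrier (R U2)" unfolding a2_def using ring_hom_closed[OF res_hom[OF m2] x] .
  define x1 where "x1 = tr U1 ?V ?i1 a1"
  define x2 where "x2 = tr U2 ?V ?i2 a2"
  have x1: "x1 \<in> carrier (R ?V)" unfolding x1_def using tr_closed[OF m1 a1] .
  have x2: "x2 \<in> carrier (R ?V)" unfolding x2_def using tr_closed[OF m2 a2] .
  have r11: "res U1 ?V ?i1 x1 = a1" unfolding x1_def by (rule res_tr_inj[OF m1 _ a1]) (simp add: inj_on_def)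
  have r22: "res U2 ?V ?i2 x2 = a2" unfolding x2_def by (rule res_tr_inj[OF m2 _ a2]) (simp add: inj_on_def)
  have r12: "res U1 ?V ?i1 x2 = \<zero>\<^bsub>R U1\<^esub>" unfolding x2_def by (rule res_tr_disj[OF g1 g2 d a2])
  have r21: "res U2 ?V ?i2 x1 = \<zero>\<^bsub>R U2\<^esub>"
  proof -
    have "res U2 (U2 \<union> U1) (restrict id U2) (tr U1 (U2 \<union> U1) (restrict id U1) a1) = \<zero>\<^bsub>R U2\<^esub>"
      by (rule res_tr_disj[OF g2 g1 _ a1]) (use d in auto)
    then show ?thesis unfolding x1_def by (simp add: Un_commute)
  qed
  have "x = x1 \<oplus>\<^bsub>R ?V\<^esub> x2"
  proof (rule coprod_inj[OF g1 g2 d x V.add.m_closed[OF x1 x2]])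
    show "res U1 ?V ?i1 x = res U1 ?V ?i1 (x1 \<oplus>\<^bsub>R ?V\<^esub> x2)"
      using ring_hom_add[OF res_hom[OF m1] x1 x2] r11 r12 a1 a1_def by simp
    show "res U2 ?V ?i2 x = res U2 ?V ?i2 (x1 \<oplus>\<^bsub>R ?V\<^esub> x2)"
      using ring_hom_add[OF res_hom[OF m2] x1 x2] r22 r21 a2 a2_def by simp
  qed
  then have "tr ?V Y f x = tr ?V Y f x1 \<oplus>\<^bsub>R Y\<^esub> tr ?V Y f x2" using tr_add[OF f x1 x2] by simp
  moreover have "tr ?V Y f x1 = tr U1 Y (restrict f U1) a1"
    unfolding x1_def using ax_comp[OF m1 f] a1 compose_incl[of U1 ?V f] by auto
  moreover have "tr ?V Y f x2 = tr U2 Y (restrict f U2) a2"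
    unfolding x2_def using ax_comp[OF m2 f] a2 compose_incl[of U2 ?V f] by auto
  ultimately show ?thesis unfolding a1_def a2_def by simp
qed

lemma units_union: assumes g1: "gset G U1" and g2: "gset G U2" and d: "U1 \<inter> U2 = {}"
  and u1: "add_pow (R U1) (n::nat) \<one>\<^bsub>R U1\<^esub> \<in> Units (R U1)"
  and u2: "add_pow (R U2) n \<one>\<^bsub>R U2\<^esub> \<in> Units (R U2)"
  shows "add_pow (R (U1 \<union> U2)) n \<one>\<^bsub>R (U1 \<union> U2)\<^esub> \<in> Units (R (U1 \<union> U2))"
proof -
  let ?V = "U1 \<union> U2" let ?i1 = "restrict id U1" let ?i2 = "restrict id U2"
  have gV: "gset G ?V" using gset_Un[OF g1 g2] .
  have m1: "gmap G U1 ?V ?i1" by (rule incl_gmap[OF gV g1]) auto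
  have m2: "gmap G U2 ?V ?i2" by (rule incl_gmap[OF gV g2]) auto
  interpret V: cring "R ?V" using cr[OF gV] .
  interpret U1: cring "R U1" using cr[OF g1] .
  interpret U2: cring "R U2" using cr[OF g2] .
  let ?k = "add_pow (R ?V) n \<one>\<^bsub>R ?V\<^esub>"
  have kc: "?k \<in> carrier (R ?V)" by simp
  obtain b1 where b1: "b1 \<in> carrier (R U1)" "add_pow (R U1) n \<one>\<^bsub>R U1\<^esub> \<otimes>\<^bsub>R U1\<^esub> b1 = \<one>\<^bsub>R U1\<^esub>"
    using u1 U1.Units_r_inv U1.Units_inv_closed by blast
  obtain b2 where b2: "b2 \<in> carrier (R U2)" "add_pow (R U2) n \<one>\<^bsub>R U2\<^esub> \<otimes>\<^bsub>R U2\<^esub> b2 = \<one>\<^bsub>R U2\<^esub>"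
    using u2 U2.Units_r_inv U2.Units_inv_closed by blast
  obtain v where v: "v \<in> carrier (R ?V)" "res U1 ?V ?i1 v = b1" "res U2 ?V ?i2 v = b2"
    using coprod_surj[OF g1 g2 d b1(1) b2(1)] by blast
  have "?k \<otimes>\<^bsub>R ?V\<^esub> v = \<one>\<^bsub>R ?V\<^esub>"
  proof (rule coprod_inj[OF g1 g2 d V.m_closed[OF kc v(1)] V.one_closed])
    show "res U1 ?V ?i1 (?k \<otimes>\<^bsub>R ?V\<^esub> v) = res U1 ?V ?i1 \<one>\<^bsub>R ?V\<^esub>"
      using ring_hom_mult[OF res_hom[OF m1] kc v(1)] res_add_pow[OF m1] v b1 ring_hom_one[OF res_hom[OF m1]] by simp
    show "res U2 ?V ?i2 (?k \<otimes>\<^bsub>R ?V\<^esub> v) = res U2 ?V ?i2 \<one>\<^bsub>R ?V\<^esub>"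
      using ring_hom_mult[OF res_hom[OF m2] kc v(1)] res_add_pow[OF m2] v b2 ring_hom_one[OF res_hom[OF m2]] by simp
  qed
  then show ?thesis using kc v(1) V.m_comm[OF kc v(1)] unfolding Units_def by auto
qed

end

context tamb begin

definition stab :: "'g gpt \<Rightarrow> 'g set" where "stab z = {g \<in> carrier G. gact G g z = z}"
definition orb :: "'g gpt \<Rightarrow> 'g gpt set" where "orb z = (\<lambda>g. gact G g z) ` carrier G"

lemma stab_subgroup: assumes "snd z \<subseteq> carrier G" shows "subgroup (stab z) G"
proof (rule subgroupI)
  show "stab z \<subseteq> carrier G" unfolding stab_def by auto
  show "stab z \<noteq> {}" using gact_one[OF assms] unfolding stab_def by auto
  fix a b assume a: "a \<in> stab z"
  then show "inv a \<in> stab z" using gact_inv[OF _ assms] unfolding stab_def by (metis (mono_tags, lifting) inv_closed mem_Collect_eq)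
  assume b: "b \<in> stab z"
  have "gact G (a \<otimes> b) z = gact G a (gact G b z)"
    using gact_mult[OF _ _ assms, of a b] a b unfolding stab_def by auto
  then show "a \<otimes> b \<in> stab z" using a b unfolding stab_def by auto
qed

lemma lcos_eq: assumes "subgroup S G" "g \<in> carrier G" "g' \<in> carrier G" "inv g \<otimes> g' \<in> S"
  shows "g <# S = g' <# S"
proof -
  have "g' = g \<otimes> (inv g \<otimes> g')" using assms(2,3) by (simp add: m_assoc[symmetric])
  then have "g' \<in> g <# S" using assms(4) unfolding l_coset_def by blast
  then show ?thesis using l_repr_independence[OF _ assms(2,1)] by blast
qed

lemma orbit_set_gset: assumes "H \<subseteq> carrier G" shows "gset G (orbit_set G H)"
proof -
  have "orbit_set G H = (\<lambda>g. (0, g <# H)) ` carrier G" unfolding orbit_set_def by auto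
  then have f: "finite (orbit_set G H)" using fin by simp
  show ?thesis unfolding gset_def
  proof (intro conjI ballI f)
    fix x assume "x \<in> orbit_set G H"
    then obtain h where h: "h \<in> carrier G" "x = (0, h <# H)" unfolding orbit_set_def by auto
    then show "snd x \<subseteq> carrier G" using l_coset_subset_G[OF assms h(1)] by simp
  next
    fix g x assume g: "g \<in> carrier G" and "x \<in> orbit_set G H"
    then obtain h where h: "h \<in> carrier G" "x = (0, h <# H)" unfolding orbit_set_def by auto
    then have "gact G g x = (0, (g \<otimes> h) <# H)" using g assms by (simp add: gact_def lcos_m_assoc)
    then show "gact G g x \<in> orbit_set G H" using g h unfolding orbit_set_def by auto
  qed
qed

lemma orb_gset: assumes "snd z \<subseteq> carrier G" shows "gset G (orb z)"
  unfolding gset_def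
proof (intro conjI ballI)
  show "finite (orb z)" unfolding orb_def using fin by simp
  fix x assume "x \<in> orb z"
  then obtain h where h: "h \<in> carrier G" "x = gact G h z" unfolding orb_def by auto
  show "snd x \<subseteq> carrier G" using gact_carrier[OF h(1) assms] h by simp
  fix g assume g: "g \<in> carrier G"
  have "gact G g x = gact G (g \<otimes> h) z" using gact_mult[OF g h(1) assms] h by simp
  then show "gact G g x \<in> orb z" unfolding orb_def using g h by auto
qed

lemma orb_sub: assumes "gset G V" "z \<in> V" shows "orb z \<subseteq> V"
  unfolding orb_def using gsetD(2)[OF assms] by auto

lemma orb_self: "snd z \<subseteq> carrier G \<Longrightarrow> z \<in> orb z"
  unfolding orb_def using gact_one by (metis image_eqI one_closed)

definition orbmap :: "'g gpt \<Rightarrow> 'g gpt \<Rightarrow> 'g gpt" where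
  "orbmap z = (\<lambda>y\<in>orb z. (0, (SOME g. g \<in> carrier G \<and> y = gact G g z) <# stab z))"

lemma orbmap_eq: assumes "snd z \<subseteq> carrier G" "g \<in> carrier G"
  shows "orbmap z (gact G g z) = (0, g <# stab z)"
proof -
  have y: "gact G g z \<in> orb z" unfolding orb_def using assms(2) by auto
  define g' where "g' = (SOME g'. g' \<in> carrier G \<and> gact G g z = gact G g' z)"
  have ex: "\<exists>g'. g' \<in> carrier G \<and> gact G g z = gact G g' z" using assms by blast
  have g': "g' \<in> carrier G" "gact G g z = gact G g' z" unfolding g'_def
    using someI_ex[OF ex] by auto
  have "gact G (inv g \<otimes> g') z = z"
    using g' assms gact_mult[OF _ _ assms(1)] gact_inv[OF assms(2,1)] by (metis inv_closed)
  then have "inv g \<otimes> g' \<in> stab z" unfolding stab_def using g' assms by auto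
  then have "g <# stab z = g' <# stab z" by (rule lcos_eq[OF stab_subgroup[OF assms(1)] assms(2) g'(1)])
  moreover have "orbmap z (gact G g z) = (0, g' <# stab z)" unfolding orbmap_def g'_def using y by simp
  ultimately show ?thesis by simp
qed

lemma orbmap_gmap: assumes "snd z \<subseteq> carrier G" shows "gmap G (orb z) (orbit_set G (stab z)) (orbmap z)"
proof (rule gmapI[OF orb_gset[OF assms] orbit_set_gset])
  show "stab z \<subseteq> carrier G" unfolding stab_def by auto
  fix x assume "x \<in> orb z"
  then obtain g where g: "g \<in> carrier G" "x = gact G g z" unfolding orb_def by auto
  then show "orbmap z x \<in> orbit_set G (stab z)" using orbmap_eq[OF assms g(1)] unfolding orbit_set_def by auto
next
  fix x assume "x \<notin> orb z" then show "orbmap z x = undefined" unfolding orbmap_def by simp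
next
  fix h x assume h: "h \<in> carrier G" and "x \<in> orb z"
  then obtain g where g: "g \<in> carrier G" "x = gact G g z" unfolding orb_def by auto
  have "orbmap z (gact G h x) = orbmap z (gact G (h \<otimes> g) z)" using g h gact_mult[OF h g(1) assms] by simp
  also have "\<dots> = (0, (h \<otimes> g) <# stab z)" using orbmap_eq[OF assms] h g by simp
  also have "\<dots> = gact G h (orbmap z x)" using orbmap_eq[OF assms g(1)] g h
    by (simp add: gact_def lcos_m_assoc stab_def)
  finally show "orbmap z (gact G h x) = gact G h (orbmap z x)" .
qed

lemma units_gset: assumes "gset G V"
  and "\<And>z. z \<in> V \<Longrightarrow> add_pow (R (orbit_set G (stab z))) (n::nat) \<one>\<^bsub>R (orbit_set G (stab z))\<^esub>
          \<in> Units (R (orbit_set G (stab z)))"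
  shows "add_pow (R V) n \<one>\<^bsub>R V\<^esub> \<in> Units (R V)"
  using assms
proof (induction "card V" arbitrary: V rule: less_induct)
  case less
  show ?case
  proof (cases "V = {}")
    case True
    then show ?thesis using empty_units ring_add_pow_closed[OF ring_R[OF gset_empty]]
      ring.ring_simprules(6)[OF ring_R[OF gset_empty]] by simp
  next
    case False
    then obtain z where z: "z \<in> V" by auto
    have sz: "snd z \<subseteq> carrier G" using gsetD(1)[OF less.prems(1) z] .
    let ?O = "orb z"
    have gO: "gset G ?O" using orb_gset[OF sz] .
    have sub: "?O \<subseteq> V" using orb_sub[OF less.prems(1) z] .
    have gD: "gset G (V - ?O)" using gset_Diff[OF less.prems(1) gO] .
    have d: "?O \<inter> (V - ?O) = {}" by auto
    have eq: "?O \<union> (V - ?O) = V" using sub by auto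
    have cardlt: "card (V - ?O) < card V"
    proof -
      have "V - ?O \<subset> V" using orb_self[OF sz] z by blast
      then show ?thesis using psubset_card_mono[OF gsetD(3)[OF less.prems(1)]] by blast
    qed
    have u1: "add_pow (R ?O) n \<one>\<^bsub>R ?O\<^esub> \<in> Units (R ?O)"
      using res_units[OF orbmap_gmap[OF sz] less.prems(2)[OF z]] res_add_pow[OF orbmap_gmap[OF sz]] by simp
    have u2: "add_pow (R (V - ?O)) n \<one>\<^bsub>R (V - ?O)\<^esub> \<in> Units (R (V - ?O))"
      using less.hyps[OF cardlt gD] less.prems(2) by auto
    show ?thesis using units_union[OF gO gD d u1 u2] eq by simp
  qed
qed

end

context tamb begin

definition U0 :: "'g gpt set" where "U0 = orbit_set G {\<one>}"
definition U1 :: "'g gpt set" where "U1 = {(1, {g}) | g. g \<in> carrier G}"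
definition AA :: "'g gpt set" where "AA = U0 \<union> U1"
definition pp :: "'g gpt \<Rightarrow> 'g gpt" where "pp = (\<lambda>a\<in>AA. (0, snd a))"
definition ff :: "'g set \<Rightarrow> 'g gpt \<Rightarrow> 'g gpt" where "ff H = (\<lambda>u\<in>U0. (0, the_elem (snd u) <# H))"
definition Zr :: "'g set \<Rightarrow> 'g gpt set" where
  "Zr H = {(0, S) | S. S \<noteq> {} \<and> (\<exists>c\<in>carrier G. S \<subseteq> c <# H \<and> S \<noteq> c <# H)}"
definition Z2 :: "'g set \<Rightarrow> 'g gpt set" where "Z2 H = {(2, c <# H) | c. c \<in> carrier G}"
definition ZZ :: "'g set \<Rightarrow> 'g gpt set" where "ZZ H = orbit_set G H \<union> (Z2 H \<union> Zr H)"
definition gg :: "'g set \<Rightarrow> 'g gpt \<Rightarrow> 'g gpt" where "gg H = (\<lambda>z\<in>ZZ H. (0, (SOME x. x \<in> snd z) <# H))"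
definition PP :: "'g set \<Rightarrow> ('g gpt \<times> 'g gpt) set" where
  "PP H = {(u, z). u \<in> U0 \<and> z \<in> ZZ H \<and> ff H u = gg H z}"
definition enc :: "'g gpt \<times> 'g gpt \<Rightarrow> 'g gpt" where
  "enc p = (to_nat_on ({0, 2} \<times> Pow (carrier G)) (fst (snd p), inv (the_elem (snd (fst p))) <# snd (snd p)),
            snd (fst p))"
definition WW :: "'g set \<Rightarrow> 'g gpt set" where "WW H = enc ` PP H"
definition dec :: "'g set \<Rightarrow> 'g gpt \<Rightarrow> 'g gpt \<times> 'g gpt" where "dec H = inv_into (PP H) enc"
definition qq :: "'g set \<Rightarrow> 'g gpt \<Rightarrow> 'g gpt" where "qq H = (\<lambda>w\<in>WW H. fst (dec H w))"
definition hh :: "'g set \<Rightarrow> 'g gpt \<Rightarrow> 'g gpt" where "hh H = (\<lambda>w\<in>WW H. snd (dec H w))"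
definition ecopy :: "'g gpt \<times> 'g gpt \<Rightarrow> 'g gpt" where
  "ecopy p = (if fst (snd p) = 0 \<and> the_elem (snd (fst p)) \<in> snd (snd p) then 0 else 1, snd (fst p))"
definition ee :: "'g set \<Rightarrow> 'g gpt \<Rightarrow> 'g gpt" where "ee H = (\<lambda>w\<in>WW H. ecopy (dec H w))"

lemma lcos_single: "g <# {x} = {g \<otimes> x}" by (simp add: l_coset_def)

lemma U0_eq: "U0 = {(0, {g}) | g. g \<in> carrier G}"
  unfolding U0_def orbit_set_def by (auto simp: lcos_single) (metis r_one)

lemma gset_U0: "gset G U0" unfolding U0_def by (rule orbit_set_gset) auto
lemma gset_U1: "gset G U1"
  unfolding gset_def U1_def
proof (intro conjI ballI)
  show "finite {(1::nat, {g}) |g. g \<in> carrier G}"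
    using fin by (simp add: setcompr_eq_image)
qed (auto simp: gact_def lcos_single)
lemma gset_AA: "gset G AA" unfolding AA_def using gset_Un[OF gset_U0 gset_U1] .
lemma U01_disj: "U0 \<inter> U1 = {}" unfolding U0_eq U1_def by auto

end

locale tambH = tamb G R res tr nm for G :: "('g,'b) monoid_scheme" (structure) and R res tr nm +
  fixes H :: "'g set" assumes H: "subgroup H G"
begin

lemma Hc: "H \<subseteq> carrier G" using H subgroup.subset by blast

lemma cos_self: "c \<in> carrier G \<Longrightarrow> c \<in> c <# H"
  unfolding l_coset_def using subgroup.one_closed[OF H] by force
lemma cos_carrier: "c \<in> carrier G \<Longrightarrow> c <# H \<subseteq> carrier G" using l_coset_subset_G[OF Hc] .
lemma cos_repr: "c \<in> carrier G \<Longrightarrow> x \<in> c <# H \<Longrightarrow> x <# H = c <# H"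
  using l_repr_independence[OF _ _ H] by metis
lemma cos_eq_iff: "c \<in> carrier G \<Longrightarrow> d \<in> carrier G \<Longrightarrow> (c <# H) \<inter> (d <# H) \<noteq> {} \<Longrightarrow> c <# H = d <# H"
  using cos_repr by blast
lemma cos_sub_eq: "c \<in> carrier G \<Longrightarrow> d \<in> carrier G \<Longrightarrow> c <# H \<subseteq> d <# H \<Longrightarrow> c <# H = d <# H"
  using cos_self cos_eq_iff by blast
lemma cos_mult: "g \<in> carrier G \<Longrightarrow> c \<in> carrier G \<Longrightarrow> g <# (c <# H) = (g \<otimes> c) <# H"
  using lcos_m_assoc[OF Hc] by blast
lemma lcos_mem_iff: "S \<subseteq> carrier G \<Longrightarrow> g \<in> carrier G \<Longrightarrow> x \<in> carrier G \<Longrightarrow> (g \<otimes> x \<in> g <# S) = (x \<in> S)"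
proof
  assume S: "S \<subseteq> carrier G" and g: "g \<in> carrier G" and x: "x \<in> carrier G" and "g \<otimes> x \<in> g <# S"
  then obtain h where "h \<in> S" "g \<otimes> x = g \<otimes> h" unfolding l_coset_def by auto
  then show "x \<in> S" using l_cancel[of g x] S g x by (metis subsetD)
next
  assume "S \<subseteq> carrier G" "g \<in> carrier G" "x \<in> carrier G" "x \<in> S"
  then show "g \<otimes> x \<in> g <# S" unfolding l_coset_def by auto
qed
lemma lcos_mono: "g <# S \<subseteq> g <# S'" if "S \<subseteq> S'" using that unfolding l_coset_def by auto
lemma lcos_inj: "S \<subseteq> carrier G \<Longrightarrow> S' \<subseteq> carrier G \<Longrightarrow> g \<in> carrier G \<Longrightarrow> g <# S = g <# S' \<Longrightarrow> S = S'"
  by (metis inv_closed lcos_m_assoc l_inv lcos_mult_one)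
lemma lcos_empty: "g <# {} = {}" unfolding l_coset_def by auto

lemma ZZ_cases: assumes "z \<in> ZZ H"
  obtains c where "c \<in> carrier G" "z = (0, c <# H)"
  | c where "c \<in> carrier G" "z = (2, c <# H)"
  | c S where "c \<in> carrier G" "z = (0, S)" "S \<noteq> {}" "S \<subseteq> c <# H" "S \<noteq> c <# H"
  using assms unfolding ZZ_def orbit_set_def Z2_def Zr_def by blast

lemma ZZ_cos: assumes "z \<in> ZZ H" obtains c where "c \<in> carrier G" "snd z \<noteq> {}" "snd z \<subseteq> c <# H"
proof -
  have "\<exists>c. c \<in> carrier G \<and> snd z \<noteq> {} \<and> snd z \<subseteq> c <# H"
    using assms by (cases rule: ZZ_cases) (use cos_self in auto)
  then show ?thesis using that by blast
qed

lemma ZZ_fst: "z \<in> ZZ H \<Longrightarrow> fst z = 0 \<or> fst z = 2"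
  by (erule ZZ_cases) auto

lemma ZZ_sub: "ZZ H \<subseteq> {0, 2} \<times> Pow (carrier G)"
proof
  fix z assume z: "z \<in> ZZ H"
  obtain c where "c \<in> carrier G" "snd z \<subseteq> c <# H" using ZZ_cos[OF z] by blast
  then show "z \<in> {0, 2} \<times> Pow (carrier G)" using ZZ_fst[OF z] cos_carrier by (cases z) auto
qed

lemma gset_Y: "gset G (orbit_set G H)" using orbit_set_gset[OF Hc] .

lemma gset_Z2: "gset G (Z2 H)"
  unfolding gset_def Z2_def
proof (intro conjI ballI)
  show "finite {(2::nat, c <# H) |c. c \<in> carrier G}" using fin by (simp add: setcompr_eq_image)
qed (auto simp: gact_def cos_mult intro: l_coset_carrier[OF _ _ H])

lemma gset_Zr: "gset G (Zr H)"
  unfolding gset_def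
proof (intro conjI ballI)
  have "Zr H \<subseteq> ZZ H" unfolding ZZ_def by auto
  then show "finite (Zr H)" using ZZ_sub fin by (meson finite_Pow_iff finite_SigmaI finite_insert finite.emptyI finite_subset subset_trans)
  fix x assume "x \<in> Zr H"
  then obtain S c where x: "x = (0, S)" "S \<noteq> {}" "c \<in> carrier G" "S \<subseteq> c <# H" "S \<noteq> c <# H"
    unfolding Zr_def by blast
  show "snd x \<subseteq> carrier G" using x cos_carrier by auto
  fix g assume g: "g \<in> carrier G"
  have "g <# S \<noteq> {}" using x(2) unfolding l_coset_def by auto
  moreover have "g <# S \<subseteq> (g \<otimes> c) <# H" using lcos_mono[OF x(4), of g] cos_mult[OF g x(3)] by simp
  moreover have "g <# S \<noteq> (g \<otimes> c) <# H"
    using lcos_inj[of S "c <# H" g] cos_mult[OF g x(3)] x cos_carrier g by auto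
  ultimately show "gact G g x \<in> Zr H" using x g unfolding Zr_def gact_def by auto
qed

lemma gset_ZZ: "gset G (ZZ H)" unfolding ZZ_def using gset_Un gset_Y gset_Z2 gset_Zr by blast

lemma ZZ_disj: "orbit_set G H \<inter> (Z2 H \<union> Zr H) = {}" "Z2 H \<inter> Zr H = {}"
proof -
  show "Z2 H \<inter> Zr H = {}" unfolding Z2_def Zr_def by auto
  show "orbit_set G H \<inter> (Z2 H \<union> Zr H) = {}"
  proof (rule ccontr)
    assume "orbit_set G H \<inter> (Z2 H \<union> Zr H) \<noteq> {}"
    then obtain c d S where "c \<in> carrier G" "(0::nat, c <# H) = (0, S)" "d \<in> carrier G" "S \<subseteq> d <# H" "S \<noteq> d <# H"
      unfolding orbit_set_def Z2_def Zr_def by auto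
    then show False using cos_sub_eq by auto
  qed
qed

lemma ZZ_nonempty: "z \<in> ZZ H \<Longrightarrow> snd z \<noteq> {}" using ZZ_cos by blast
lemma ZZ_carrier: "z \<in> ZZ H \<Longrightarrow> snd z \<subseteq> carrier G" using gsetD(1)[OF gset_ZZ] .

lemma gg_val: assumes z: "z \<in> ZZ H" and c: "c \<in> carrier G" "snd z \<subseteq> c <# H"
  shows "gg H z = (0, c <# H)"
proof -
  have ex: "\<exists>x. x \<in> snd z" using ZZ_nonempty[OF z] by auto
  have "(SOME x. x \<in> snd z) \<in> c <# H" using someI_ex[OF ex] c(2) by auto
  then show ?thesis unfolding gg_def using z cos_repr[OF c(1)] by simp
qed

lemma ff_val: "g \<in> carrier G \<Longrightarrow> ff H (0, {g}) = (0, g <# H)"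
  unfolding ff_def U0_eq by auto

lemma U0_elem: "u \<in> U0 \<Longrightarrow> \<exists>x\<in>carrier G. u = (0, {x})" unfolding U0_eq by auto

lemma gact_single: "gact G g (n, {x}) = (n, {g \<otimes> x})" by (simp add: gact_def lcos_single)

lemma ff_gmap: "gmap G U0 (orbit_set G H) (ff H)"
proof (rule gmapI[OF gset_U0 gset_Y])
  fix u assume "u \<in> U0" then obtain x where x: "x \<in> carrier G" "u = (0, {x})" using U0_elem by blast
  then show "ff H u \<in> orbit_set G H" using ff_val[OF x(1)] unfolding orbit_set_def by auto
next
  fix u assume "u \<notin> U0" then show "ff H u = undefined" unfolding ff_def by simp
next
  fix g u assume g: "g \<in> carrier G" and "u \<in> U0"
  then obtain x where x: "x \<in> carrier G" "u = (0, {x})" using U0_elem by blast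
  have "gact G g u = (0, {g \<otimes> x})" using x by (simp add: gact_single)
  then have "ff H (gact G g u) = (0, (g \<otimes> x) <# H)" using ff_val g x(1) by simp
  then show "ff H (gact G g u) = gact G g (ff H u)"
    using ff_val x g by (simp add: gact_def cos_mult)
qed

lemma gg_gmap: "gmap G (ZZ H) (orbit_set G H) (gg H)"
proof (rule gmapI[OF gset_ZZ gset_Y])
  fix z assume z: "z \<in> ZZ H"
  then obtain c where c: "c \<in> carrier G" "snd z \<subseteq> c <# H" using ZZ_cos by blast
  then show "gg H z \<in> orbit_set G H" using gg_val[OF z c] unfolding orbit_set_def by auto
next
  fix z assume "z \<notin> ZZ H" then show "gg H z = undefined" unfolding gg_def by simp
next
  fix g z assume g: "g \<in> carrier G" and z: "z \<in> ZZ H"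
  then obtain c where c: "c \<in> carrier G" "snd z \<subseteq> c <# H" using ZZ_cos by blast
  have gz: "gact G g z \<in> ZZ H" using gsetD(2)[OF gset_ZZ z g] .
  have "snd (gact G g z) \<subseteq> (g \<otimes> c) <# H"
    using lcos_mono[OF c(2), of g] cos_mult[OF g c(1)] by (simp add: gact_def)
  then have "gg H (gact G g z) = (0, (g \<otimes> c) <# H)" using gg_val[OF gz] g c by simp
  then show "gg H (gact G g z) = gact G g (gg H z)" using gg_val[OF z c] g c by (simp add: gact_def cos_mult)
qed

lemma PP_closed: assumes "p \<in> PP H" "g \<in> carrier G"
  shows "(gact G g (fst p), gact G g (snd p)) \<in> PP H"
proof -
  obtain u z where p: "p = (u, z)" "u \<in> U0" "z \<in> ZZ H" "ff H u = gg H z" using assms(1) unfolding PP_def by auto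
  have "ff H (gact G g u) = gg H (gact G g z)" using gmapD(5)[OF ff_gmap assms(2) p(2)] gmapD(5)[OF gg_gmap assms(2) p(3)] p(4) by simp
  then show ?thesis using p gsetD(2)[OF gset_U0 p(2) assms(2)] gsetD(2)[OF gset_ZZ p(3) assms(2)] unfolding PP_def by simp
qed

lemma PP_elem: assumes "p \<in> PP H"
  obtains x z where "x \<in> carrier G" "p = ((0, {x}), z)" "z \<in> ZZ H" "x <# H = snd (gg H z)" "snd z \<subseteq> x <# H"
proof -
  obtain u z where p: "p = (u, z)" "u \<in> U0" "z \<in> ZZ H" "ff H u = gg H z" using assms(1) unfolding PP_def by auto
  obtain x where x: "x \<in> carrier G" "u = (0, {x})" using U0_elem[OF p(2)] by blast
  obtain c where c: "c \<in> carrier G" "snd z \<subseteq> c <# H" using ZZ_cos[OF p(3)] by blast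
  have "x <# H = c <# H" using p(4) gg_val[OF p(3) c] ff_val[OF x(1)] x by simp
  then show ?thesis using that[OF x(1) _ p(3)] p x gg_val[OF p(3) c] c by simp
qed

lemma PP_fin: "finite (PP H)"
proof -
  have "PP H \<subseteq> U0 \<times> ZZ H" unfolding PP_def by auto
  moreover have "finite (ZZ H)" using gsetD(3)[OF gset_ZZ] .
  ultimately show ?thesis using gsetD(3)[OF gset_U0] by (meson finite_SigmaI finite_subset)
qed

lemma enc_arg: assumes "p \<in> PP H"
  shows "(fst (snd p), inv (the_elem (snd (fst p))) <# snd (snd p)) \<in> {0, 2} \<times> Pow (carrier G)"
proof -
  obtain x z where p: "x \<in> carrier G" "p = ((0, {x}), z)" "z \<in> ZZ H" using PP_elem[OF assms] by metis
  show ?thesis using p ZZ_fst[OF p(3)] ZZ_carrier[OF p(3)] l_coset_subset_G[of "snd z" "inv x"] by auto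
qed

lemma enc_inj: "inj_on enc (PP H)"
proof (rule inj_onI)
  fix p p' assume pp: "p \<in> PP H" and pp': "p' \<in> PP H" and e: "enc p = enc p'"
  obtain x z where p: "x \<in> carrier G" "p = ((0, {x}), z)" "z \<in> ZZ H" using PP_elem[OF pp] by metis
  obtain x' z' where p': "x' \<in> carrier G" "p' = ((0, {x'}), z')" "z' \<in> ZZ H" using PP_elem[OF pp'] by metis
  have cnt: "countable ({0::nat, 2} \<times> Pow (carrier G))" using fin by (simp add: countable_finite)
  have xx: "x = x'" using e p p' unfolding enc_def by simp
  have "(fst z, inv x <# snd z) = (fst z', inv x <# snd z')"
    using e p p' xx inj_onD[OF inj_on_to_nat_on[OF cnt] _ enc_arg[OF pp] enc_arg[OF pp']] unfolding enc_def by simp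
  then have "fst z = fst z'" "snd z = snd z'"
    using lcos_inj[OF ZZ_carrier[OF p(3)] ZZ_carrier[OF p'(3)], of "inv x"] p(1) by auto
  then show "p = p'" using p p' xx by (simp add: prod_eq_iff)
qed

lemma enc_equiv: assumes "p \<in> PP H" "g \<in> carrier G"
  shows "enc (gact G g (fst p), gact G g (snd p)) = gact G g (enc p)"
proof -
  obtain x z where p: "x \<in> carrier G" "p = ((0, {x}), z)" "z \<in> ZZ H" using PP_elem[OF assms(1)] by metis
  have "inv (g \<otimes> x) <# (g <# snd z) = inv x <# snd z"
    using lcos_m_assoc[OF ZZ_carrier[OF p(3)]] p(1) assms(2)
    by (simp add: inv_mult_group m_assoc)
  then show ?thesis using p unfolding enc_def by (simp add: gact_single gact_def lcos_single)
qed

lemma WW_gset: "gset G (WW H)"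
  unfolding gset_def WW_def
proof (intro conjI ballI)
  show "finite (enc ` PP H)" using PP_fin by simp
  fix w assume "w \<in> enc ` PP H"
  then obtain p where p: "p \<in> PP H" "w = enc p" by auto
  obtain x z where pe: "x \<in> carrier G" "p = ((0, {x}), z)" using PP_elem[OF p(1)] by metis
  show "snd w \<subseteq> carrier G" using p pe unfolding enc_def by simp
  fix g assume g: "g \<in> carrier G"
  show "gact G g w \<in> enc ` PP H" using enc_equiv[OF p(1) g] PP_closed[OF p(1) g] p by (metis image_eqI)
qed

lemma dec_enc: "p \<in> PP H \<Longrightarrow> dec H (enc p) = p"
  unfolding dec_def using enc_inj by (simp add: inv_into_f_f)
lemma dec_PP: "w \<in> WW H \<Longrightarrow> dec H w \<in> PP H"
  unfolding dec_def WW_def by (simp add: inv_into_into)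
lemma enc_dec: "w \<in> WW H \<Longrightarrow> enc (dec H w) = w"
  unfolding dec_def WW_def by (simp add: f_inv_into_f)
lemma dec_equiv: assumes "w \<in> WW H" "g \<in> carrier G"
  shows "dec H (gact G g w) = (gact G g (fst (dec H w)), gact G g (snd (dec H w)))"
  using enc_equiv[OF dec_PP[OF assms(1)] assms(2)] enc_dec[OF assms(1)] dec_enc[OF PP_closed[OF dec_PP[OF assms(1)] assms(2)]]
  by simp

lemma dec_mem: "w \<in> WW H \<Longrightarrow> fst (dec H w) \<in> U0 \<and> snd (dec H w) \<in> ZZ H"
  using dec_PP[of w] unfolding PP_def by (cases "dec H w") auto

lemma dec_comm: "w \<in> WW H \<Longrightarrow> ff H (fst (dec H w)) = gg H (snd (dec H w))"
  using dec_PP[of w] unfolding PP_def by (cases "dec H w") auto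

lemma qq_gmap: "gmap G (WW H) U0 (qq H)"
proof (rule gmapI[OF WW_gset gset_U0])
  fix w assume "w \<in> WW H" then show "qq H w \<in> U0" using dec_mem unfolding qq_def by auto
next
  fix w assume "w \<notin> WW H" then show "qq H w = undefined" unfolding qq_def by simp
next
  fix g w assume "g \<in> carrier G" "w \<in> WW H"
  then show "qq H (gact G g w) = gact G g (qq H w)" unfolding qq_def using dec_equiv gsetD(2)[OF WW_gset] by simp
qed

lemma hh_gmap: "gmap G (WW H) (ZZ H) (hh H)"
proof (rule gmapI[OF WW_gset gset_ZZ])
  fix w assume "w \<in> WW H" then show "hh H w \<in> ZZ H" using dec_mem unfolding hh_def by auto
next
  fix w assume "w \<notin> WW H" then show "hh H w = undefined" unfolding hh_def by simp
next
  fix g w assume "g \<in> carrier G" "w \<in> WW H"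
  then show "hh H (gact G g w) = gact G g (hh H w)" unfolding hh_def using dec_equiv gsetD(2)[OF WW_gset] by simp
qed

lemma ecopy_val: "ecopy ((0, {x}), z) = (if fst z = 0 \<and> x \<in> snd z then 0 else 1, {x})"
  unfolding ecopy_def by simp

lemma ee_gmap: "gmap G (WW H) AA (ee H)"
proof (rule gmapI[OF WW_gset gset_AA])
  fix w assume "w \<in> WW H"
  then obtain x z where p: "x \<in> carrier G" "dec H w = ((0, {x}), z)" using PP_elem[OF dec_PP] by metis
  then show "ee H w \<in> AA" unfolding ee_def AA_def U0_eq U1_def using \<open>w \<in> WW H\<close> ecopy_val by auto
next
  fix w assume "w \<notin> WW H" then show "ee H w = undefined" unfolding ee_def by simp
next
  fix g w assume g: "g \<in> carrier G" and w: "w \<in> WW H"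
  then obtain x z where p: "x \<in> carrier G" "dec H w = ((0, {x}), z)" "z \<in> ZZ H" using PP_elem[OF dec_PP] by metis
  have "(g \<otimes> x \<in> g <# snd z) = (x \<in> snd z)" using lcos_mem_iff[OF ZZ_carrier[OF p(3)] g p(1)] .
  then show "ee H (gact G g w) = gact G g (ee H w)"
    unfolding ee_def using dec_equiv[OF w g] p gsetD(2)[OF WW_gset w g] w
    by (simp add: ecopy_val gact_def lcos_single)
qed

lemma pp_gmap: "gmap G AA U0 pp"
proof (rule gmapI[OF gset_AA gset_U0])
  fix a assume "a \<in> AA" then show "pp a \<in> U0" unfolding pp_def AA_def U0_eq U1_def by auto
next
  fix a assume "a \<notin> AA" then show "pp a = undefined" unfolding pp_def by simp
next
  fix g a assume g: "g \<in> carrier G" and a: "a \<in> AA"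
  then show "pp (gact G g a) = gact G g (pp a)" unfolding pp_def using gsetD(2)[OF gset_AA a g] by (simp add: gact_def)
qed

lemma fiber_eq: assumes c: "c \<in> carrier G" shows "{u \<in> U0. ff H u = (0, c <# H)} = {(0, {x}) | x. x \<in> c <# H}"
proof -
  have "\<And>x. x \<in> carrier G \<Longrightarrow> (x <# H = c <# H) = (x \<in> c <# H)"
    using cos_repr[OF c] cos_self by blast
  moreover have "\<And>x. x \<in> c <# H \<Longrightarrow> x \<in> carrier G" using cos_carrier[OF c] by blast
  ultimately show ?thesis unfolding U0_eq using ff_val by auto
qed

lemma pb_sub: assumes Z': "gset G Z'" "Z' \<subseteq> ZZ H"
  shows "is_pullback G U0 (orbit_set G H) Z' {w \<in> WW H. hh H w \<in> Z'} (ff H) (restrict (gg H) Z')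
    (restrict (qq H) {w \<in> WW H. hh H w \<in> Z'}) (restrict (hh H) {w \<in> WW H. hh H w \<in> Z'})"
proof -
  let ?W = "{w \<in> WW H. hh H w \<in> Z'}"
  have gW: "gset G ?W" using gset_preimage[OF hh_gmap Z'(1)] .
  have m1: "gmap G Z' (orbit_set G H) (restrict (gg H) Z')" using gmap_restrict[OF gg_gmap Z'] .
  have m2: "gmap G ?W U0 (restrict (qq H) ?W)" using gmap_restrict[OF qq_gmap gW] by auto
  have m3: "gmap G ?W Z' (restrict (hh H) ?W)" using gmap_cod[OF gmap_restrict[OF hh_gmap gW] Z'(1)] by auto
  have comm: "\<forall>w\<in>?W. ff H (restrict (qq H) ?W w) = restrict (gg H) Z' (restrict (hh H) ?W w)"
    using dec_comm dec_mem Z'(2) unfolding qq_def hh_def by auto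
  have b: "bij_betw (\<lambda>w. (restrict (qq H) ?W w, restrict (hh H) ?W w)) ?W
     {(x, z). x \<in> U0 \<and> z \<in> Z' \<and> ff H x = restrict (gg H) Z' z}"
  proof -
    have cong: "\<And>w. w \<in> ?W \<Longrightarrow> (restrict (qq H) ?W w, restrict (hh H) ?W w) = dec H w"
      unfolding qq_def hh_def by auto
    have "bij_betw (dec H) ?W {(x, z). x \<in> U0 \<and> z \<in> Z' \<and> ff H x = restrict (gg H) Z' z}"
      unfolding bij_betw_def
    proof
      show "inj_on (dec H) ?W"
      proof (rule inj_onI)
        fix v w assume v: "v \<in> ?W" and w: "w \<in> ?W" and e: "dec H v = dec H w"
        have "v = enc (dec H v)" using enc_dec v by simp
        also have "\<dots> = enc (dec H w)" using e by simp
        also have "\<dots> = w" using enc_dec w by simp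
        finally show "v = w" .
      qed
      show "dec H ` ?W = {(x, z). x \<in> U0 \<and> z \<in> Z' \<and> ff H x = restrict (gg H) Z' z}"
      proof
        show "dec H ` ?W \<subseteq> {(x, z). x \<in> U0 \<and> z \<in> Z' \<and> ff H x = restrict (gg H) Z' z}"
        proof
          fix p assume "p \<in> dec H ` ?W"
          then obtain w where w: "w \<in> WW H" "hh H w \<in> Z'" "p = dec H w" by auto
          then show "p \<in> {(x, z). x \<in> U0 \<and> z \<in> Z' \<and> ff H x = restrict (gg H) Z' z}"
            using dec_mem[OF w(1)] dec_comm[OF w(1)] unfolding hh_def by (cases p) auto
        qed
      next
        show "{(x, z). x \<in> U0 \<and> z \<in> Z' \<and> ff H x = restrict (gg H) Z' z} \<subseteq> dec H ` ?W"
        proof (clarsimp)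
          fix u z assume u: "u \<in> U0" "z \<in> Z'" "ff H u = gg H z"
          then have p: "(u, z) \<in> PP H" unfolding PP_def using Z'(2) by auto
          have w: "enc (u, z) \<in> WW H" unfolding WW_def using p by blast
          have "hh H (enc (u, z)) = z" unfolding hh_def using w dec_enc[OF p] by simp
          then have "enc (u, z) \<in> ?W" using w u(2) by simp
          then show "(u, z) \<in> dec H ` ?W" using image_eqI[where f="dec H" and x="enc (u, z)", OF sym[OF dec_enc[OF p]]] by blast
        qed
      qed
    qed
    then show ?thesis using bij_betw_cong[of ?W, OF cong] by simp
  qed
  show ?thesis unfolding is_pullback_def using ff_gmap m1 m2 m3 comm b by blast
qed

lemma pb_full: "is_pullback G U0 (orbit_set G H) (ZZ H) (WW H) (ff H) (gg H) (qq H) (hh H)"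
proof -
  have e1: "{w \<in> WW H. hh H w \<in> ZZ H} = WW H" using gmapD(3)[OF hh_gmap] by auto
  have e2: "restrict (gg H) (ZZ H) = gg H" unfolding gg_def by auto
  have e3: "restrict (qq H) (WW H) = qq H" unfolding qq_def by auto
  have e4: "restrict (hh H) (WW H) = hh H" unfolding hh_def by auto
  show ?thesis using pb_sub[OF gset_ZZ order_refl] unfolding e1 e2 e3 e4 .
qed


end

context tambH begin

lemma the_w: assumes "u \<in> U0" "z \<in> ZZ H" "ff H u = gg H z"
  shows "(THE w. w \<in> WW H \<and> qq H w = u \<and> hh H w = z) = enc (u, z)"
proof -
  have p: "(u, z) \<in> PP H" using assms unfolding PP_def by auto
  show ?thesis
  proof (rule the_equality)
    show "enc (u, z) \<in> WW H \<and> qq H (enc (u, z)) = u \<and> hh H (enc (u, z)) = z"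
      using p dec_enc[OF p] unfolding WW_def qq_def hh_def by auto
    fix w assume "w \<in> WW H \<and> qq H w = u \<and> hh H w = z"
    then have "w \<in> WW H" "dec H w = (u, z)" unfolding qq_def hh_def by (auto simp: prod_eq_iff)
    then show "w = enc (u, z)" using enc_dec by metis
  qed
qed

definition sec :: "'g gpt \<Rightarrow> 'g gpt \<Rightarrow> 'g gpt" where
  "sec z = (\<lambda>u\<in>{u \<in> U0. ff H u = gg H z}. ecopy (u, z))"

lemma sec_eq: assumes "z \<in> ZZ H"
  shows "(\<lambda>x\<in>{x \<in> U0. ff H x = gg H z}. ee H (THE w. w \<in> WW H \<and> qq H w = x \<and> hh H w = z)) = sec z"
proof -
  have "\<And>u. u \<in> U0 \<Longrightarrow> ff H u = gg H z \<Longrightarrow> ee H (THE w. w \<in> WW H \<and> qq H w = u \<and> hh H w = z) = ecopy (u, z)"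
  proof -
    fix u assume u: "u \<in> U0" "ff H u = gg H z"
    have p: "(u, z) \<in> PP H" using u assms unfolding PP_def by auto
    show "ee H (THE w. w \<in> WW H \<and> qq H w = u \<and> hh H w = z) = ecopy (u, z)"
      using the_w[OF u(1) assms u(2)] dec_enc[OF p] p unfolding ee_def WW_def by auto
  qed
  then show ?thesis unfolding sec_def by (auto intro: restrict_ext)
qed

lemma sec_val: assumes z: "z \<in> ZZ H" and c: "c \<in> carrier G" "snd z \<subseteq> c <# H" and x: "x \<in> c <# H"
  shows "sec z (0, {x}) = (if fst z = 0 \<and> x \<in> snd z then 0 else 1, {x})"
proof -
  have "(0, {x}) \<in> {u \<in> U0. ff H u = gg H z}" using fiber_eq[OF c(1)] gg_val[OF z c] x by auto
  then show ?thesis unfolding sec_def by (simp add: ecopy_val)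
qed

lemma AA_cases: "a \<in> AA \<Longrightarrow> \<exists>x\<in>carrier G. a = (0, {x}) \<or> a = (1, {x})"
  unfolding AA_def U0_eq U1_def by auto

lemma if01: "((if P then 0::nat else 1) = (if Q then 0 else 1)) = (P = Q)" by auto

lemma exp_full: "is_exponential G AA U0 (orbit_set G H) (ZZ H) (WW H) pp (ff H) (gg H) (hh H) (qq H) (ee H)"
proof -
  let ?T = "{(y, s). y \<in> orbit_set G H \<and> s \<in> {x \<in> U0. ff H x = y} \<rightarrow>\<^sub>E AA
     \<and> (\<forall>x\<in>{x \<in> U0. ff H x = y}. pp (s x) = x)}"
  have ppee: "\<forall>w\<in>WW H. pp (ee H w) = qq H w"
  proof
    fix w assume w: "w \<in> WW H"
    then obtain x z where p: "x \<in> carrier G" "dec H w = ((0, {x}), z)" using PP_elem[OF dec_PP] by metis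
    have "ee H w \<in> AA" using gmapD(3)[OF ee_gmap w] .
    then show "pp (ee H w) = qq H w" using w p unfolding ee_def qq_def pp_def by (simp add: ecopy_val)
  qed
  have inj: "inj_on (\<lambda>z. (gg H z, sec z)) (ZZ H)"
  proof (rule inj_onI)
    fix z1 z2 assume z1: "z1 \<in> ZZ H" and z2: "z2 \<in> ZZ H" and e: "(gg H z1, sec z1) = (gg H z2, sec z2)"
    obtain c1 where c1: "c1 \<in> carrier G" "snd z1 \<subseteq> c1 <# H" using ZZ_cos[OF z1] by blast
    obtain c2 where c2: "c2 \<in> carrier G" "snd z2 \<subseteq> c2 <# H" using ZZ_cos[OF z2] by blast
    have cc: "c1 <# H = c2 <# H" using e gg_val[OF z1 c1] gg_val[OF z2 c2] by simp
    have key: "\<And>x. x \<in> c1 <# H \<Longrightarrow> (fst z1 = 0 \<and> x \<in> snd z1) = (fst z2 = 0 \<and> x \<in> snd z2)"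
    proof -
      fix x assume x: "x \<in> c1 <# H"
      have x2: "x \<in> c2 <# H" using x cc by simp
      have "sec z1 (0, {x}) = sec z2 (0, {x})" using e by simp
      then have "(if fst z1 = 0 \<and> x \<in> snd z1 then 0::nat else 1, {x}) = (if fst z2 = 0 \<and> x \<in> snd z2 then 0 else 1, {x})"
        unfolding sec_val[OF z1 c1 x] sec_val[OF z2 c2 x2] .
      then show "(fst z1 = 0 \<and> x \<in> snd z1) = (fst z2 = 0 \<and> x \<in> snd z2)"
        unfolding prod.inject if01 by simp
    qed
    show "z1 = z2"
    proof (cases "fst z1 = 0 \<or> fst z2 = 0")
      case True
      then have f: "fst z1 = 0 \<and> fst z2 = 0"
      proof
        assume f1: "fst z1 = 0"
        obtain x where "x \<in> snd z1" using ZZ_nonempty[OF z1] by blast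
        then show ?thesis using key[of x] c1 f1 by auto
      next
        assume f2: "fst z2 = 0"
        obtain x where "x \<in> snd z2" using ZZ_nonempty[OF z2] by blast
        then show ?thesis using key[of x] c2 cc f2 by auto
      qed
      have "snd z1 = snd z2" using key f c1(2) c2(2) cc by blast
      then show ?thesis using f by (simp add: prod_eq_iff)
    next
      case False
      have "fst z1 = 2" "fst z2 = 2" using False ZZ_fst[OF z1] ZZ_fst[OF z2] by auto
      then obtain d1 d2 where d: "d1 \<in> carrier G" "z1 = (2, d1 <# H)" "d2 \<in> carrier G" "z2 = (2, d2 <# H)"
        using z1 z2 by (metis ZZ_cases fst_conv zero_neq_numeral)
      have "gg H z1 = (0, d1 <# H)" "gg H z2 = (0, d2 <# H)" using gg_val z1 z2 d by auto
      then show ?thesis using e d by simp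
    qed
  qed
  have img1: "(\<lambda>z. (gg H z, sec z)) ` ZZ H \<subseteq> ?T"
  proof
    fix p assume "p \<in> (\<lambda>z. (gg H z, sec z)) ` ZZ H"
    then obtain z where z: "z \<in> ZZ H" and pz: "p = (gg H z, sec z)" by auto
    have ec: "\<And>u. u \<in> U0 \<Longrightarrow> ecopy (u, z) \<in> AA \<and> pp (ecopy (u, z)) = u"
    proof -
      fix u assume "u \<in> U0"
      then obtain x where x: "x \<in> carrier G" "u = (0, {x})" using U0_elem by blast
      show "ecopy (u, z) \<in> AA \<and> pp (ecopy (u, z)) = u"
        using x unfolding AA_def U0_eq U1_def pp_def
        by (cases "fst z = 0 \<and> x \<in> snd z") (auto simp: ecopy_val)
    qed
    have "sec z \<in> {x \<in> U0. ff H x = gg H z} \<rightarrow>\<^sub>E AA" unfolding sec_def using ec by (simp add: restrict_PiE_iff)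
    moreover have "\<forall>x\<in>{x \<in> U0. ff H x = gg H z}. pp (sec z x) = x" unfolding sec_def using ec by simp
    ultimately show "p \<in> ?T" using gmapD(3)[OF gg_gmap z] pz by simp
  qed
  have img2: "?T \<subseteq> (\<lambda>z. (gg H z, sec z)) ` ZZ H"
  proof
    fix p assume "p \<in> ?T"
    then obtain y s where y: "y \<in> orbit_set G H" and s: "s \<in> {x \<in> U0. ff H x = y} \<rightarrow>\<^sub>E AA"
      and sp: "\<forall>x\<in>{x \<in> U0. ff H x = y}. pp (s x) = x" and pys: "p = (y, s)" by auto
    obtain c where c: "c \<in> carrier G" "y = (0, c <# H)" using y unfolding orbit_set_def by auto
    have fib: "{x \<in> U0. ff H x = y} = {(0, {x}) | x. x \<in> c <# H}" using fiber_eq[OF c(1)] c(2) by simp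
    have sv: "\<And>x. x \<in> c <# H \<Longrightarrow> s (0, {x}) = (0, {x}) \<or> s (0, {x}) = (1, {x})"
    proof -
      fix x assume x: "x \<in> c <# H"
      then have u: "(0, {x}) \<in> {x \<in> U0. ff H x = y}" using fib by auto
      have "s (0, {x}) \<in> AA" using PiE_mem[OF s u] .
      then obtain g where g: "s (0, {x}) = (0, {g}) \<or> s (0, {x}) = (1, {g})" using AA_cases by blast
      have "pp (s (0, {x})) = (0, {x})" using sp u by blast
      moreover have "s (0, {x}) \<in> AA" using PiE_mem[OF s u] .
      ultimately have "snd (s (0, {x})) = {x}" unfolding pp_def by simp
      moreover have "snd (s (0, {x})) = {g}" using g by auto
      ultimately have "g = x" by simp
      then show "s (0, {x}) = (0, {x}) \<or> s (0, {x}) = (1, {x})" using g by simp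
    qed
    define S where "S = {x \<in> c <# H. s (0, {x}) = (0, {x})}"
    define z where "z = (if S = {} then (2::nat, c <# H) else (0, S))"
    have Ssub: "S \<subseteq> c <# H" unfolding S_def by auto
    have zZ: "z \<in> ZZ H"
    proof (cases "S = {}")
      case True
      then have "z = (2, c <# H)" unfolding z_def by simp
      then have "z \<in> Z2 H" unfolding Z2_def using c(1) by blast
      then show ?thesis unfolding ZZ_def by blast
    next
      case False
      then have zS: "z = (0, S)" unfolding z_def by simp
      show ?thesis
      proof (cases "S = c <# H")
        case True
        then have "z \<in> orbit_set G H" unfolding orbit_set_def using zS c(1) by blast
        then show ?thesis unfolding ZZ_def by blast
      next
        case False2: False
        then have "z \<in> Zr H" unfolding Zr_def using zS False c(1) Ssub by blast
        then show ?thesis unfolding ZZ_def by blast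
      qed
    qed
    have zc: "snd z \<subseteq> c <# H" unfolding z_def using Ssub by auto
    have ggz: "gg H z = y" using gg_val[OF zZ c(1) zc] c(2) by simp
    have "sec z = s"
    proof
      fix u
      show "sec z u = s u"
      proof (cases "u \<in> {x \<in> U0. ff H x = y}")
        case True
        then obtain x where x: "x \<in> c <# H" "u = (0, {x})" using fib by auto
        have "sec z u = (if fst z = 0 \<and> x \<in> snd z then 0 else 1, {x})" using sec_val[OF zZ c(1) zc x(1)] x by simp
        then show ?thesis using sv[OF x(1)] x unfolding z_def S_def by auto
      next
        case False
        then show ?thesis using PiE_arb[OF s False] False unfolding sec_def ggz by auto
      qed
    qed
    then show "p \<in> (\<lambda>z. (gg H z, sec z)) ` ZZ H" using ggz zZ pys image_eqI[where f="\<lambda>z. (gg H z, sec z)" and x=z] by simp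
  qed
  have b: "bij_betw (\<lambda>z. (gg H z, sec z)) (ZZ H) ?T" unfolding bij_betw_def using inj img1 img2 by blast
  have b2: "bij_betw (\<lambda>z. (gg H z, \<lambda>x\<in>{x \<in> U0. ff H x = gg H z}. ee H (THE w. w \<in> WW H \<and> qq H w = x \<and> hh H w = z)))
      (ZZ H) ?T"
    using bij_betw_cong[of "ZZ H" "\<lambda>z. (gg H z, \<lambda>x\<in>{x \<in> U0. ff H x = gg H z}. ee H (THE w. w \<in> WW H \<and> qq H w = x \<and> hh H w = z))"
        "\<lambda>z. (gg H z, sec z)"] sec_eq b by simp
  show ?thesis unfolding is_exponential_def using pp_gmap pb_full ee_gmap ppee b2 by blast
qed

end

context tambH begin

lemma Hfin: "finite H" using fin Hc finite_subset by blast

lemma stab_card: assumes z: "z \<in> Zr H" shows "card (stab z) < card H"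
proof -
  obtain S c where zS: "z = (0, S)" "S \<noteq> {}" "c \<in> carrier G" "S \<subseteq> c <# H" "S \<noteq> c <# H"
    using z unfolding Zr_def by blast
  have Sc: "S \<subseteq> carrier G" using zS(3,4) cos_carrier by blast
  obtain x0 where x0: "x0 \<in> S" using zS(2) by blast
  have x0c: "x0 \<in> carrier G" using x0 Sc by blast
  define \<phi> where "\<phi> = (\<lambda>s. inv c \<otimes> s \<otimes> c)"
  have stS: "\<And>s. s \<in> stab z \<Longrightarrow> s \<in> carrier G \<and> s <# S = S"
    unfolding stab_def zS(1) gact_def by auto
  have inj: "inj_on \<phi> (stab z)"
  proof (rule inj_onI)
    fix s t assume s: "s \<in> stab z" and t: "t \<in> stab z" and e: "\<phi> s = \<phi> t"
    have sc: "s \<in> carrier G" and tc: "t \<in> carrier G" using stS s t by auto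
    then show "s = t" using e zS(3) unfolding \<phi>_def by (metis inv_closed m_closed r_cancel l_cancel)
  qed
  have into: "\<phi> ` stab z \<subseteq> H"
  proof
    fix y assume "y \<in> \<phi> ` stab z"
    then obtain s where s: "s \<in> stab z" "y = \<phi> s" by auto
    have sc: "s \<in> carrier G" and sS: "s <# S = S" using stS[OF s(1)] by auto
    have "s \<otimes> x0 \<in> S" using sS x0 unfolding l_coset_def by blast
    moreover have "s \<otimes> x0 \<in> (s \<otimes> c) <# H"
      using lcos_mono[OF zS(4), of s] x0 cos_mult[OF sc zS(3)] unfolding l_coset_def by blast
    ultimately have "(s \<otimes> c) <# H = c <# H" using cos_eq_iff[OF _ zS(3)] zS(4) sc zS(3) by blast
    then have "s \<otimes> c \<in> c <# H" using cos_self[of "s \<otimes> c"] sc zS(3) by simp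
    then obtain h where h: "h \<in> H" "s \<otimes> c = c \<otimes> h" unfolding l_coset_def by blast
    have hc: "h \<in> carrier G" using h(1) Hc by blast
    have "inv c \<otimes> s \<otimes> c = inv c \<otimes> (c \<otimes> h)" using h(2) sc zS(3) by (simp add: m_assoc)
    also have "\<dots> = h" using hc zS(3) by (simp add: m_assoc[symmetric])
    finally show "y \<in> H" using s(2) h(1) unfolding \<phi>_def by simp
  qed
  have neq: "\<phi> ` stab z \<noteq> H"
  proof
    assume eq: "\<phi> ` stab z = H"
    obtain h0 where h0: "h0 \<in> H" "x0 = c \<otimes> h0" using x0 zS(4) unfolding l_coset_def by blast
    have h0c: "h0 \<in> carrier G" using h0(1) Hc by blast
    have "c <# H \<subseteq> S"
    proof
      fix y assume "y \<in> c <# H"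
      then obtain h where h: "h \<in> H" "y = c \<otimes> h" unfolding l_coset_def by blast
      have hc: "h \<in> carrier G" using h(1) Hc by blast
      have "h \<otimes> inv h0 \<in> H" using h(1) h0(1) H by (simp add: subgroup.m_closed subgroup.m_inv_closed)
      then obtain s where s: "s \<in> stab z" "\<phi> s = h \<otimes> inv h0" using eq by (metis imageE)
      have sc: "s \<in> carrier G" and sS: "s <# S = S" using stS[OF s(1)] by auto
      have cc: "c \<in> carrier G" by (rule zS(3))
      have "s = c \<otimes> (inv c \<otimes> s \<otimes> c) \<otimes> inv c"
        using sc cc by (simp add: m_assoc[symmetric]) (simp add: m_assoc)
      then have "s = c \<otimes> (h \<otimes> inv h0) \<otimes> inv c" using s(2) unfolding \<phi>_def by simp
      then have "s \<otimes> x0 = c \<otimes> (h \<otimes> inv h0) \<otimes> inv c \<otimes> (c \<otimes> h0)" using h0 by simp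
      also have "\<dots> = c \<otimes> h"
        using hc h0c cc by (simp add: m_assoc[symmetric]) (simp add: m_assoc)
      finally have "s \<otimes> x0 = y" using h by simp
      moreover have "s \<otimes> x0 \<in> s <# S" using x0 unfolding l_coset_def by blast
      ultimately show "y \<in> S" using sS by simp
    qed
    then show False using zS(4,5) by blast
  qed
  have "card (\<phi> ` stab z) < card H" using into neq Hfin by (meson psubsetI psubset_card_mono)
  then show ?thesis using card_image[OF inj] by simp
qed

lemma U1_sub: "U1 \<subseteq> AA" and U0_sub: "U0 \<subseteq> AA" unfolding AA_def by auto

lemma sigma_gmap: "gmap G U1 U0 (restrict pp U1)"
  using gmap_restrict[OF pp_gmap gset_U1 U1_sub] .

lemma sigma_bij: "bij_betw (restrict pp U1) U1 U0"
  unfolding bij_betw_def inj_on_def U1_def U0_eq pp_def AA_def by (auto simp: image_def)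

lemma pp_U0: "restrict pp U0 = restrict id U0"
  by (rule ext) (auto simp: pp_def AA_def U0_eq)

lemma tr_pp: assumes a: "a \<in> carrier (R U0)" and b: "b \<in> carrier (R U0)"
  and x: "x \<in> carrier (R AA)" and xa: "res U0 AA (restrict id U0) x = a"
  and xb: "res U1 AA (restrict id U1) x = res U1 U0 (restrict pp U1) b"
  shows "tr AA U0 pp x = a \<oplus>\<^bsub>R U0\<^esub> b"
proof -
  have "tr AA U0 pp x = tr U0 U0 (restrict pp U0) (res U0 AA (restrict id U0) x)
     \<oplus>\<^bsub>R U0\<^esub> tr U1 U0 (restrict pp U1) (res U1 AA (restrict id U1) x)"
    using tr_decomp[OF gset_U0 gset_U1 U01_disj, of U0 pp x] pp_gmap x unfolding AA_def by simp
  also have "\<dots> = a \<oplus>\<^bsub>R U0\<^esub> b"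
    using xa xb pp_U0 ax_id[OF gset_U0 a] iso_tr_res[OF sigma_gmap sigma_bij b] by simp
  finally show ?thesis .
qed

lemma restrict_restrict_sub: "B \<subseteq> A \<Longrightarrow> restrict (restrict f A) B = restrict f B"
  by (rule ext) auto

lemma gg_Y: "restrict (gg H) (orbit_set G H) = restrict id (orbit_set G H)"
proof (rule ext)
  fix z show "restrict (gg H) (orbit_set G H) z = restrict id (orbit_set G H) z"
  proof (cases "z \<in> orbit_set G H")
    case True
    then obtain c where c: "c \<in> carrier G" "z = (0, c <# H)" unfolding orbit_set_def by auto
    have zZ: "z \<in> ZZ H" using True unfolding ZZ_def by auto
    show ?thesis using gg_val[OF zZ c(1)] c True by simp
  qed simp
qed

lemma gg_Z2_bij: "bij_betw (restrict (gg H) (Z2 H)) (Z2 H) (orbit_set G H)"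
proof -
  have v: "\<And>c. c \<in> carrier G \<Longrightarrow> gg H (2, c <# H) = (0, c <# H)"
  proof -
    fix c assume c: "c \<in> carrier G"
    have "(2, c <# H) \<in> ZZ H" unfolding ZZ_def Z2_def using c by auto
    then show "gg H (2, c <# H) = (0, c <# H)" using gg_val c by simp
  qed
  show ?thesis unfolding bij_betw_def inj_on_def Z2_def orbit_set_def using v by (auto simp: image_def)
qed

lemma Z2_sub: "Z2 H \<subseteq> ZZ H" and Y_sub: "orbit_set G H \<subseteq> ZZ H" and Zr_sub: "Zr H \<subseteq> ZZ H"
  and Z2r_sub: "Z2 H \<union> Zr H \<subseteq> ZZ H"
  unfolding ZZ_def by auto

lemma W_Y_ee: assumes w: "w \<in> WW H" and hw: "hh H w \<in> orbit_set G H" shows "ee H w = qq H w"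
proof -
  obtain x z where p: "x \<in> carrier G" "dec H w = ((0, {x}), z)" "z \<in> ZZ H" "snd z \<subseteq> x <# H"
    using PP_elem[OF dec_PP[OF w]] by metis
  have "z \<in> orbit_set G H" using hw w p(2) unfolding hh_def by simp
  then obtain d where d: "d \<in> carrier G" "z = (0, d <# H)" unfolding orbit_set_def by auto
  have "d <# H = x <# H" using cos_sub_eq[OF d(1) p(1)] p(4) d(2) by simp
  then have "x \<in> snd z" using cos_self[OF p(1)] d(2) by simp
  then show ?thesis unfolding ee_def qq_def using w p d by (simp add: ecopy_val)
qed

lemma W_Z2_ee: assumes w: "w \<in> WW H" and hw: "hh H w \<in> Z2 H"
  shows "ee H w \<in> U1" "restrict pp U1 (ee H w) = qq H w"
proof -
  obtain x z where p: "x \<in> carrier G" "dec H w = ((0, {x}), z)" "z \<in> ZZ H"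
    using PP_elem[OF dec_PP[OF w]] by metis
  have "z \<in> Z2 H" using hw w p(2) unfolding hh_def by simp
  then have f: "fst z = 2" unfolding Z2_def by auto
  have e: "ee H w = (1, {x})" unfolding ee_def using w p f by (simp add: ecopy_val)
  show "ee H w \<in> U1" using e p(1) unfolding U1_def by auto
  then show "restrict pp U1 (ee H w) = qq H w" using e w p unfolding pp_def qq_def AA_def by simp
qed

lemma nm_add: assumes a: "a \<in> carrier (R U0)" and b: "b \<in> carrier (R U0)"
  shows "\<exists>d\<in>carrier (R (Zr H)). nm U0 (orbit_set G H) (ff H) (a \<oplus>\<^bsub>R U0\<^esub> b) =
     nm U0 (orbit_set G H) (ff H) a \<oplus>\<^bsub>R (orbit_set G H)\<^esub> nm U0 (orbit_set G H) (ff H) b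
     \<oplus>\<^bsub>R (orbit_set G H)\<^esub> tr (Zr H) (orbit_set G H) (restrict (gg H) (Zr H)) d"
proof -
  let ?Y = "orbit_set G H"
  let ?N = "nm U0 ?Y (ff H)"
  let ?W1 = "{w \<in> WW H. hh H w \<in> ?Y}"
  let ?W2 = "{w \<in> WW H. hh H w \<in> Z2 H}"
  let ?Z2r = "Z2 H \<union> Zr H"
  let ?\<sigma> = "restrict pp U1"
  interpret Yr: cring "R ?Y" using cr[OF gset_Y] .
  have gZ2r: "gset G ?Z2r" using gset_Un[OF gset_Z2 gset_Zr] .
  have gW1: "gset G ?W1" using gset_preimage[OF hh_gmap gset_Y] .
  have gW2: "gset G ?W2" using gset_preimage[OF hh_gmap gset_Z2] .
  have rb: "res U1 U0 ?\<sigma> b \<in> carrier (R U1)" using ring_hom_closed[OF res_hom[OF sigma_gmap] b] .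
  obtain x where x: "x \<in> carrier (R AA)" "res U0 AA (restrict id U0) x = a"
     "res U1 AA (restrict id U1) x = res U1 U0 ?\<sigma> b"
    using coprod_surj[OF gset_U0 gset_U1 U01_disj a rb] unfolding AA_def by blast
  define r where "r = res (WW H) AA (ee H) x"
  have r: "r \<in> carrier (R (WW H))" unfolding r_def using ring_hom_closed[OF res_hom[OF ee_gmap] x(1)] .
  define c where "c = nm (WW H) (ZZ H) (hh H) r"
  have c: "c \<in> carrier (R (ZZ H))" unfolding c_def using nm_closed[OF hh_gmap r] .
  have s1: "?N (a \<oplus>\<^bsub>R U0\<^esub> b) = tr (ZZ H) ?Y (gg H) c"
    using tr_pp[OF a b x] ax_dist[OF exp_full ff_gmap x(1)] unfolding c_def r_def by simp
  have s2: "tr (ZZ H) ?Y (gg H) c = tr ?Y ?Y (restrict (gg H) ?Y) (res ?Y (ZZ H) (restrict id ?Y) c)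
      \<oplus>\<^bsub>R ?Y\<^esub> tr ?Z2r ?Y (restrict (gg H) ?Z2r) (res ?Z2r (ZZ H) (restrict id ?Z2r) c)"
    using tr_decomp[OF gset_Y gZ2r ZZ_disj(1), of ?Y "gg H" c] gg_gmap c unfolding ZZ_def by simp
  define c' where "c' = res ?Z2r (ZZ H) (restrict id ?Z2r) c"
  have mZ2r: "gmap G ?Z2r (ZZ H) (restrict id ?Z2r)" using incl_gmap[OF gset_ZZ gZ2r Z2r_sub] .
  have c': "c' \<in> carrier (R ?Z2r)" unfolding c'_def using ring_hom_closed[OF res_hom[OF mZ2r] c] .
  have mZ2: "gmap G (Z2 H) ?Z2r (restrict id (Z2 H))" using incl_gmap[OF gZ2r gset_Z2] by auto
  have s3: "tr ?Z2r ?Y (restrict (gg H) ?Z2r) c' = tr (Z2 H) ?Y (restrict (gg H) (Z2 H)) (res (Z2 H) (ZZ H) (restrict id (Z2 H)) c)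
     \<oplus>\<^bsub>R ?Y\<^esub> tr (Zr H) ?Y (restrict (gg H) (Zr H)) (res (Zr H) ?Z2r (restrict id (Zr H)) c')"
  proof -
    have "tr ?Z2r ?Y (restrict (gg H) ?Z2r) c' = tr (Z2 H) ?Y (restrict (restrict (gg H) ?Z2r) (Z2 H)) (res (Z2 H) ?Z2r (restrict id (Z2 H)) c')
     \<oplus>\<^bsub>R ?Y\<^esub> tr (Zr H) ?Y (restrict (restrict (gg H) ?Z2r) (Zr H)) (res (Zr H) ?Z2r (restrict id (Zr H)) c')"
      by (rule tr_decomp[OF gset_Z2 gset_Zr ZZ_disj(2) gmap_restrict[OF gg_gmap gZ2r Z2r_sub] c'])
    moreover have "res (Z2 H) ?Z2r (restrict id (Z2 H)) c' = res (Z2 H) (ZZ H) (restrict id (Z2 H)) c"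
    proof -
      have "res (Z2 H) (ZZ H) (compose (Z2 H) (restrict id ?Z2r) (restrict id (Z2 H))) c
          = res (Z2 H) ?Z2r (restrict id (Z2 H)) c'"
        using ax_comp[OF mZ2 mZ2r] c unfolding c'_def by blast
      moreover have "compose (Z2 H) (restrict id ?Z2r) (restrict id (Z2 H)) = restrict id (Z2 H)"
        by (rule ext) (auto simp: compose_def)
      ultimately show ?thesis by simp
    qed
    ultimately show ?thesis using restrict_restrict_sub[of "Z2 H" ?Z2r "gg H"] restrict_restrict_sub[of "Zr H" ?Z2r "gg H"]
      by auto
  qed
  have sY: "res ?Y (ZZ H) (restrict id ?Y) c = ?N a"
  proof -
    have mW1: "gmap G ?W1 (WW H) (restrict id ?W1)" using incl_gmap[OF WW_gset gW1] by auto
    have mq1: "gmap G ?W1 U0 (restrict (qq H) ?W1)" using gmap_restrict[OF qq_gmap gW1] by auto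
    have mU0: "gmap G U0 AA (restrict id U0)" using incl_gmap[OF gset_AA gset_U0 U0_sub] .
    have e1: "res ?Y (ZZ H) (restrict id ?Y) c = nm ?W1 ?Y (restrict (hh H) ?W1) (res ?W1 (WW H) (restrict id ?W1) r)"
      unfolding c_def using bc_incl(1)[OF hh_gmap gset_Y Y_sub r] .
    have "res ?W1 (WW H) (restrict id ?W1) r = res ?W1 AA (compose ?W1 (ee H) (restrict id ?W1)) x"
      using ax_comp[OF mW1 ee_gmap] x(1) unfolding r_def by auto
    also have "compose ?W1 (ee H) (restrict id ?W1) = compose ?W1 (restrict id U0) (restrict (qq H) ?W1)"
    proof -
      have "compose ?W1 (ee H) (restrict id ?W1) = restrict (ee H) ?W1" using compose_incl by auto
      also have "\<dots> = compose ?W1 (restrict id U0) (restrict (qq H) ?W1)"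
        by (rule ext) (auto simp: compose_def W_Y_ee gmapD(3)[OF qq_gmap])
      finally show ?thesis .
    qed
    also have "res ?W1 AA (compose ?W1 (restrict id U0) (restrict (qq H) ?W1)) x
        = res ?W1 U0 (restrict (qq H) ?W1) (res U0 AA (restrict id U0) x)"
      using ax_comp[OF mq1 mU0] x(1) by blast
    finally have e2': "res ?W1 (WW H) (restrict id ?W1) r = res ?W1 U0 (restrict (qq H) ?W1) (res U0 AA (restrict id U0) x)" .
    have e2: "res ?W1 (WW H) (restrict id ?W1) r = res ?W1 U0 (restrict (qq H) ?W1) a" using e2' unfolding x(2) .
    have "res ?Y ?Y (restrict (gg H) ?Y) (?N a) = nm ?W1 ?Y (restrict (hh H) ?W1) (res ?W1 U0 (restrict (qq H) ?W1) a)"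
      using ax_bc[OF pb_sub[OF gset_Y Y_sub] a] by blast
    moreover have "res ?Y ?Y (restrict (gg H) ?Y) (?N a) = ?N a"
      using gg_Y ax_id[OF gset_Y nm_closed[OF ff_gmap a]] by simp
    ultimately show ?thesis using e1 e2 by simp
  qed
  have sZ2: "res (Z2 H) (ZZ H) (restrict id (Z2 H)) c = res (Z2 H) ?Y (restrict (gg H) (Z2 H)) (?N b)"
  proof -
    have mW2: "gmap G ?W2 (WW H) (restrict id ?W2)" using incl_gmap[OF WW_gset gW2] by auto
    have me2: "gmap G ?W2 U1 (restrict (ee H) ?W2)"
    proof -
      have "restrict (ee H) ?W2 ` ?W2 \<subseteq> U1" using W_Z2_ee(1) by auto
      then show ?thesis using gmap_cod[OF gmap_restrict[OF ee_gmap gW2] gset_U1] by auto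
    qed
    have mU1: "gmap G U1 AA (restrict id U1)" using incl_gmap[OF gset_AA gset_U1 U1_sub] .
    have e1: "res (Z2 H) (ZZ H) (restrict id (Z2 H)) c = nm ?W2 (Z2 H) (restrict (hh H) ?W2) (res ?W2 (WW H) (restrict id ?W2) r)"
      unfolding c_def using bc_incl(1)[OF hh_gmap gset_Z2 Z2_sub r] .
    have "res ?W2 (WW H) (restrict id ?W2) r = res ?W2 AA (compose ?W2 (ee H) (restrict id ?W2)) x"
      using ax_comp[OF mW2 ee_gmap] x(1) unfolding r_def by auto
    also have "compose ?W2 (ee H) (restrict id ?W2) = compose ?W2 (restrict id U1) (restrict (ee H) ?W2)"
    proof -
      have "compose ?W2 (ee H) (restrict id ?W2) = restrict (ee H) ?W2" using compose_incl by auto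
      also have "\<dots> = compose ?W2 (restrict id U1) (restrict (ee H) ?W2)"
        by (rule ext) (auto simp: compose_def W_Z2_ee(1))
      finally show ?thesis .
    qed
    also have "res ?W2 AA (compose ?W2 (restrict id U1) (restrict (ee H) ?W2)) x
        = res ?W2 U1 (restrict (ee H) ?W2) (res U1 AA (restrict id U1) x)"
      using ax_comp[OF me2 mU1] x(1) by blast
    also have "\<dots> = res ?W2 U1 (restrict (ee H) ?W2) (res U1 U0 ?\<sigma> b)" using x(3) by simp
    also have "\<dots> = res ?W2 U0 (compose ?W2 ?\<sigma> (restrict (ee H) ?W2)) b"
      by (rule sym) (use ax_comp[OF me2 sigma_gmap] b in blast)
    also have "compose ?W2 ?\<sigma> (restrict (ee H) ?W2) = restrict (qq H) ?W2"
    proof (rule ext)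
      fix w show "compose ?W2 ?\<sigma> (restrict (ee H) ?W2) w = restrict (qq H) ?W2 w"
      proof (cases "w \<in> ?W2")
        case True then show ?thesis using W_Z2_ee(1)[of w] W_Z2_ee(2)[of w] by (simp add: compose_def)
      next
        case False then show ?thesis unfolding compose_def by auto
      qed
    qed
    finally have e2: "res ?W2 (WW H) (restrict id ?W2) r = res ?W2 U0 (restrict (qq H) ?W2) b" .
    have "res (Z2 H) ?Y (restrict (gg H) (Z2 H)) (?N b) = nm ?W2 (Z2 H) (restrict (hh H) ?W2) (res ?W2 U0 (restrict (qq H) ?W2) b)"
      using ax_bc[OF pb_sub[OF gset_Z2 Z2_sub] b] by blast
    then show ?thesis using e1 e2 by simp
  qed
  have mtau: "gmap G (Z2 H) ?Y (restrict (gg H) (Z2 H))" using gmap_restrict[OF gg_gmap gset_Z2 Z2_sub] .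
  have Nb: "?N b \<in> carrier (R ?Y)" using nm_closed[OF ff_gmap b] .
  have Na: "?N a \<in> carrier (R ?Y)" using nm_closed[OF ff_gmap a] .
  have pZ2: "tr (Z2 H) ?Y (restrict (gg H) (Z2 H)) (res (Z2 H) (ZZ H) (restrict id (Z2 H)) c) = ?N b"
    using sZ2 iso_tr_res[OF mtau gg_Z2_bij Nb] by simp
  have pY: "tr ?Y ?Y (restrict (gg H) ?Y) (res ?Y (ZZ H) (restrict id ?Y) c) = ?N a"
    using sY gg_Y ax_id[OF gset_Y Na] by simp
  define d where "d = res (Zr H) ?Z2r (restrict id (Zr H)) c'"
  have mZr: "gmap G (Zr H) ?Z2r (restrict id (Zr H))" using incl_gmap[OF gZ2r gset_Zr] by auto
  have d: "d \<in> carrier (R (Zr H))" unfolding d_def using ring_hom_closed[OF res_hom[OF mZr] c'] .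
  have td: "tr (Zr H) ?Y (restrict (gg H) (Zr H)) d \<in> carrier (R ?Y)"
    using tr_closed[OF gmap_restrict[OF gg_gmap gset_Zr Zr_sub] d] .
  have t1: "?N (a \<oplus>\<^bsub>R U0\<^esub> b) = ?N a \<oplus>\<^bsub>R ?Y\<^esub> tr ?Z2r ?Y (restrict (gg H) ?Z2r) c'"
    by (simp only: s1 s2 pY c'_def)
  have t2: "tr ?Z2r ?Y (restrict (gg H) ?Z2r) c' = ?N b \<oplus>\<^bsub>R ?Y\<^esub> tr (Zr H) ?Y (restrict (gg H) (Zr H)) d"
    by (simp only: s3 pZ2 d_def)
  have "?N (a \<oplus>\<^bsub>R U0\<^esub> b) = ?N a \<oplus>\<^bsub>R ?Y\<^esub> (?N b \<oplus>\<^bsub>R ?Y\<^esub> tr (Zr H) ?Y (restrict (gg H) (Zr H)) d)"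
    by (simp only: t1 t2)
  also have "\<dots> = ?N a \<oplus>\<^bsub>R ?Y\<^esub> ?N b \<oplus>\<^bsub>R ?Y\<^esub> tr (Zr H) ?Y (restrict (gg H) (Zr H)) d"
    using Yr.a_assoc[OF Na Nb td] by simp
  finally show ?thesis using d by blast
qed

end

context tambH begin

lemma Zr_div: assumes u: "add_pow (R (Zr H)) (n::nat) \<one>\<^bsub>R (Zr H)\<^esub> \<in> Units (R (Zr H))"
  and d: "d \<in> carrier (R (Zr H))"
  shows "\<exists>t\<in>carrier (R (orbit_set G H)). tr (Zr H) (orbit_set G H) (restrict (gg H) (Zr H)) d
     = add_pow (R (orbit_set G H)) n \<one>\<^bsub>R (orbit_set G H)\<^esub> \<otimes>\<^bsub>R (orbit_set G H)\<^esub> t"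
proof -
  let ?Y = "orbit_set G H" let ?Z = "Zr H" let ?f = "restrict (gg H) (Zr H)"
  interpret Z: cring "R ?Z" using cr[OF gset_Zr] .
  interpret Yr: cring "R ?Y" using cr[OF gset_Y] .
  have mf: "gmap G ?Z ?Y ?f" using gmap_restrict[OF gg_gmap gset_Zr Zr_sub] .
  let ?k = "add_pow (R ?Z) n \<one>\<^bsub>R ?Z\<^esub>"
  obtain v where v: "v \<in> carrier (R ?Z)" "?k \<otimes>\<^bsub>R ?Z\<^esub> v = \<one>\<^bsub>R ?Z\<^esub>"
    using u Z.Units_r_inv Z.Units_inv_closed by blast
  have kc: "?k \<in> carrier (R ?Z)" by simp
  define e where "e = v \<otimes>\<^bsub>R ?Z\<^esub> d"
  have e: "e \<in> carrier (R ?Z)" unfolding e_def using v d by simp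
  have "d = ?k \<otimes>\<^bsub>R ?Z\<^esub> e" unfolding e_def using v d kc by (simp add: Z.m_assoc[symmetric])
  also have "\<dots> = add_pow (R ?Z) n e" using Z.add_pow_ldistr[OF Z.one_closed e] e by simp
  finally have "tr ?Z ?Y ?f d = add_pow (R ?Y) n (tr ?Z ?Y ?f e)" using tr_add_pow[OF mf e] by simp
  also have "\<dots> = add_pow (R ?Y) n \<one>\<^bsub>R ?Y\<^esub> \<otimes>\<^bsub>R ?Y\<^esub> tr ?Z ?Y ?f e"
    using Yr.add_pow_ldistr[OF Yr.one_closed tr_closed[OF mf e]] tr_closed[OF mf e] by simp
  finally show ?thesis using tr_closed[OF mf e] by blast
qed

lemma step: assumes n0: "add_pow (R U0) (n::nat) \<one>\<^bsub>R U0\<^esub> \<in> Units (R U0)"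
  and IH: "\<And>K. subgroup K G \<Longrightarrow> card K < card H \<Longrightarrow>
      add_pow (R (orbit_set G K)) n \<one>\<^bsub>R (orbit_set G K)\<^esub> \<in> Units (R (orbit_set G K))"
  shows "add_pow (R (orbit_set G H)) n \<one>\<^bsub>R (orbit_set G H)\<^esub> \<in> Units (R (orbit_set G H))"
proof -
  let ?Y = "orbit_set G H"
  let ?N = "nm U0 ?Y (ff H)"
  let ?k = "add_pow (R ?Y) n \<one>\<^bsub>R ?Y\<^esub>"
  interpret Yr: cring "R ?Y" using cr[OF gset_Y] .
  interpret U: cring "R U0" using cr[OF gset_U0] .
  have kc: "?k \<in> carrier (R ?Y)" by simp
  have uZr: "add_pow (R (Zr H)) n \<one>\<^bsub>R (Zr H)\<^esub> \<in> Units (R (Zr H))"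
  proof (rule units_gset[OF gset_Zr])
    fix z assume z: "z \<in> Zr H"
    have "snd z \<subseteq> carrier G" using gsetD(1)[OF gset_Zr z] .
    then show "add_pow (R (orbit_set G (stab z))) n \<one>\<^bsub>R (orbit_set G (stab z))\<^esub> \<in> Units (R (orbit_set G (stab z)))"
      using IH[OF stab_subgroup stab_card[OF z]] by blast
  qed
  have key: "\<And>a b. a \<in> carrier (R U0) \<Longrightarrow> b \<in> carrier (R U0) \<Longrightarrow>
      \<exists>t\<in>carrier (R ?Y). ?N (a \<oplus>\<^bsub>R U0\<^esub> b) = ?N a \<oplus>\<^bsub>R ?Y\<^esub> ?N b \<oplus>\<^bsub>R ?Y\<^esub> ?k \<otimes>\<^bsub>R ?Y\<^esub> t"
  proof -
    fix a b assume a: "a \<in> carrier (R U0)" and b: "b \<in> carrier (R U0)"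
    obtain d where d: "d \<in> carrier (R (Zr H))" and e: "?N (a \<oplus>\<^bsub>R U0\<^esub> b) =
     ?N a \<oplus>\<^bsub>R ?Y\<^esub> ?N b \<oplus>\<^bsub>R ?Y\<^esub> tr (Zr H) ?Y (restrict (gg H) (Zr H)) d"
      using nm_add[OF a b] by blast
    obtain t where t: "t \<in> carrier (R ?Y)" "tr (Zr H) ?Y (restrict (gg H) (Zr H)) d = ?k \<otimes>\<^bsub>R ?Y\<^esub> t"
      using Zr_div[OF uZr d] by blast
    have "?N (a \<oplus>\<^bsub>R U0\<^esub> b) = ?N a \<oplus>\<^bsub>R ?Y\<^esub> ?N b \<oplus>\<^bsub>R ?Y\<^esub> ?k \<otimes>\<^bsub>R ?Y\<^esub> t"
      using e t(2) by simp
    then show "\<exists>t\<in>carrier (R ?Y). ?N (a \<oplus>\<^bsub>R U0\<^esub> b) = ?N a \<oplus>\<^bsub>R ?Y\<^esub> ?N b \<oplus>\<^bsub>R ?Y\<^esub> ?k \<otimes>\<^bsub>R ?Y\<^esub> t"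
      using t(1) by blast
  qed
  have Nc: "\<And>a. a \<in> carrier (R U0) \<Longrightarrow> ?N a \<in> carrier (R ?Y)" using nm_closed[OF ff_gmap] .
  have ind: "\<exists>t\<in>carrier (R ?Y). ?N (add_pow (R U0) m \<one>\<^bsub>R U0\<^esub>) = add_pow (R ?Y) m \<one>\<^bsub>R ?Y\<^esub> \<oplus>\<^bsub>R ?Y\<^esub> ?k \<otimes>\<^bsub>R ?Y\<^esub> t" for m :: nat
  proof (induction m)
    case 0
    obtain t where t: "t \<in> carrier (R ?Y)" and e: "?N (\<zero>\<^bsub>R U0\<^esub> \<oplus>\<^bsub>R U0\<^esub> \<zero>\<^bsub>R U0\<^esub>) =
        ?N \<zero>\<^bsub>R U0\<^esub> \<oplus>\<^bsub>R ?Y\<^esub> ?N \<zero>\<^bsub>R U0\<^esub> \<oplus>\<^bsub>R ?Y\<^esub> ?k \<otimes>\<^bsub>R ?Y\<^esub> t"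
      using key[OF U.zero_closed U.zero_closed] by blast
    let ?x = "?N \<zero>\<^bsub>R U0\<^esub>" let ?y = "?k \<otimes>\<^bsub>R ?Y\<^esub> t"
    have xc: "?x \<in> carrier (R ?Y)" using Nc by simp
    have yc: "?y \<in> carrier (R ?Y)" using t by simp
    have "?x = ?x \<oplus>\<^bsub>R ?Y\<^esub> (?x \<oplus>\<^bsub>R ?Y\<^esub> ?y)" using e xc yc by (simp add: Yr.a_assoc)
    then have "?x \<oplus>\<^bsub>R ?Y\<^esub> ?y = \<zero>\<^bsub>R ?Y\<^esub>" using Yr.add.l_cancel_one'[OF xc Yr.add.m_closed[OF xc yc]] by simp
    then have "?x = \<ominus>\<^bsub>R ?Y\<^esub> ?y" using Yr.minus_equality[OF _ yc xc] by (simp add: Yr.a_comm[OF xc yc])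
    also have "\<dots> = ?k \<otimes>\<^bsub>R ?Y\<^esub> (\<ominus>\<^bsub>R ?Y\<^esub> t)" using Yr.r_minus[OF kc t] by simp
    finally have "?x = \<zero>\<^bsub>R ?Y\<^esub> \<oplus>\<^bsub>R ?Y\<^esub> ?k \<otimes>\<^bsub>R ?Y\<^esub> (\<ominus>\<^bsub>R ?Y\<^esub> t)" using t by simp
    then show ?case using t by (intro bexI[of _ "\<ominus>\<^bsub>R ?Y\<^esub> t"]) simp_all
  next
    case (Suc m)
    obtain tm where tm: "tm \<in> carrier (R ?Y)" and em: "?N (add_pow (R U0) m \<one>\<^bsub>R U0\<^esub>) = add_pow (R ?Y) m \<one>\<^bsub>R ?Y\<^esub> \<oplus>\<^bsub>R ?Y\<^esub> ?k \<otimes>\<^bsub>R ?Y\<^esub> tm"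
      using Suc by blast
    have mc: "add_pow (R U0) m \<one>\<^bsub>R U0\<^esub> \<in> carrier (R U0)" by simp
    obtain t where t: "t \<in> carrier (R ?Y)" and e: "?N (add_pow (R U0) m \<one>\<^bsub>R U0\<^esub> \<oplus>\<^bsub>R U0\<^esub> \<one>\<^bsub>R U0\<^esub>) =
        ?N (add_pow (R U0) m \<one>\<^bsub>R U0\<^esub>) \<oplus>\<^bsub>R ?Y\<^esub> ?N \<one>\<^bsub>R U0\<^esub> \<oplus>\<^bsub>R ?Y\<^esub> ?k \<otimes>\<^bsub>R ?Y\<^esub> t"
      using key[OF mc U.one_closed] by blast
    have mY: "add_pow (R ?Y) m \<one>\<^bsub>R ?Y\<^esub> \<in> carrier (R ?Y)" by simp
    have "?N (add_pow (R U0) (Suc m) \<one>\<^bsub>R U0\<^esub>) = (add_pow (R ?Y) m \<one>\<^bsub>R ?Y\<^esub> \<oplus>\<^bsub>R ?Y\<^esub> ?k \<otimes>\<^bsub>R ?Y\<^esub> tm)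
        \<oplus>\<^bsub>R ?Y\<^esub> \<one>\<^bsub>R ?Y\<^esub> \<oplus>\<^bsub>R ?Y\<^esub> ?k \<otimes>\<^bsub>R ?Y\<^esub> t"
      using e em nm_one[OF ff_gmap] by (simp add: U.add.nat_pow_Suc)
    also have "\<dots> = add_pow (R ?Y) (Suc m) \<one>\<^bsub>R ?Y\<^esub> \<oplus>\<^bsub>R ?Y\<^esub> ?k \<otimes>\<^bsub>R ?Y\<^esub> (tm \<oplus>\<^bsub>R ?Y\<^esub> t)"
      using tm t mY kc by (simp add: Yr.add.nat_pow_Suc Yr.r_distr Yr.a_ac)
    finally show ?case using tm t by blast
  qed
  obtain t where t: "t \<in> carrier (R ?Y)" and et: "?N (add_pow (R U0) n \<one>\<^bsub>R U0\<^esub>) = ?k \<oplus>\<^bsub>R ?Y\<^esub> ?k \<otimes>\<^bsub>R ?Y\<^esub> t"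
    using ind by blast
  have et2: "?N (add_pow (R U0) n \<one>\<^bsub>R U0\<^esub>) = ?k \<otimes>\<^bsub>R ?Y\<^esub> (\<one>\<^bsub>R ?Y\<^esub> \<oplus>\<^bsub>R ?Y\<^esub> t)"
    using et t kc by (simp add: Yr.r_distr)
  obtain u where u: "u \<in> carrier (R U0)" "add_pow (R U0) n \<one>\<^bsub>R U0\<^esub> \<otimes>\<^bsub>R U0\<^esub> u = \<one>\<^bsub>R U0\<^esub>"
    using n0 U.Units_r_inv U.Units_inv_closed by blast
  have "?N (add_pow (R U0) n \<one>\<^bsub>R U0\<^esub>) \<otimes>\<^bsub>R ?Y\<^esub> ?N u = \<one>\<^bsub>R ?Y\<^esub>"
    using nm_mult[OF ff_gmap _ u(1), of "add_pow (R U0) n \<one>\<^bsub>R U0\<^esub>"] u(2) nm_one[OF ff_gmap] by simp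
  then have "?k \<otimes>\<^bsub>R ?Y\<^esub> ((\<one>\<^bsub>R ?Y\<^esub> \<oplus>\<^bsub>R ?Y\<^esub> t) \<otimes>\<^bsub>R ?Y\<^esub> ?N u) = \<one>\<^bsub>R ?Y\<^esub>"
    using et2 t kc Nc[OF u(1)] by (simp add: Yr.m_assoc)
  moreover have "(\<one>\<^bsub>R ?Y\<^esub> \<oplus>\<^bsub>R ?Y\<^esub> t) \<otimes>\<^bsub>R ?Y\<^esub> ?N u \<in> carrier (R ?Y)" using t Nc[OF u(1)] by simp
  ultimately have "?k \<otimes>\<^bsub>R ?Y\<^esub> ((\<one>\<^bsub>R ?Y\<^esub> \<oplus>\<^bsub>R ?Y\<^esub> t) \<otimes>\<^bsub>R ?Y\<^esub> ?N u) = \<one>\<^bsub>R ?Y\<^esub>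
     \<and> ((\<one>\<^bsub>R ?Y\<^esub> \<oplus>\<^bsub>R ?Y\<^esub> t) \<otimes>\<^bsub>R ?Y\<^esub> ?N u) \<otimes>\<^bsub>R ?Y\<^esub> ?k = \<one>\<^bsub>R ?Y\<^esub>
     \<and> (\<one>\<^bsub>R ?Y\<^esub> \<oplus>\<^bsub>R ?Y\<^esub> t) \<otimes>\<^bsub>R ?Y\<^esub> ?N u \<in> carrier (R ?Y)"
    using Yr.m_comm[OF kc] by simp
  then show ?thesis using kc unfolding Units_def by blast
qed

end

lemma all_subgroups:
  assumes tm: "tamb G R res tr nm"
    and n0: "add_pow (R (orbit_set G {\<one>\<^bsub>G\<^esub>})) (n::nat) \<one>\<^bsub>R (orbit_set G {\<one>\<^bsub>G\<^esub>})\<^esub>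
              \<in> Units (R (orbit_set G {\<one>\<^bsub>G\<^esub>}))"
  shows "subgroup H G \<Longrightarrow> add_pow (R (orbit_set G H)) n \<one>\<^bsub>R (orbit_set G H)\<^esub> \<in> Units (R (orbit_set G H))"
proof (induction "card H" arbitrary: H rule: less_induct)
  case less
  interpret tambH G R res tr nm H
    by (rule tambH.intro[OF tm]) (simp add: tambH_axioms_def less.prems)
  show ?case
  proof (rule step)
    show "add_pow (R U0) n \<one>\<^bsub>R U0\<^esub> \<in> Units (R U0)" using n0 unfolding U0_def .
    fix K assume "subgroup K G" "card K < card H"
    then show "add_pow (R (orbit_set G K)) n \<one>\<^bsub>R (orbit_set G K)\<^esub> \<in> Units (R (orbit_set G K))"
      using less.hyps by blast
  qed
qed

lemma int_units: assumes "cring S"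
  shows "(int_elem S k \<in> Units S) = (add_pow S (nat \<bar>k\<bar>) \<one>\<^bsub>S\<^esub> \<in> Units S)"
proof -
  interpret cring S by fact
  show ?thesis
  proof (cases "k \<ge> 0")
    case True then show ?thesis unfolding int_elem_def using add_pow_int_ge[OF True, of S "\<one>\<^bsub>S\<^esub>"] by simp
  next
    case False
    then have e: "int_elem S k = \<ominus>\<^bsub>S\<^esub> add_pow S (nat \<bar>k\<bar>) \<one>\<^bsub>S\<^esub>"
      unfolding int_elem_def using add_pow_int_lt[of k S] by simp
    let ?x = "add_pow S (nat \<bar>k\<bar>) \<one>\<^bsub>S\<^esub>"
    have xc: "?x \<in> carrier S" by simp
    have m: "\<ominus>\<^bsub>S\<^esub> ?x = \<ominus>\<^bsub>S\<^esub> \<one>\<^bsub>S\<^esub> \<otimes>\<^bsub>S\<^esub> ?x" using l_minus[OF one_closed xc] xc by simp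
    have m2: "?x = \<ominus>\<^bsub>S\<^esub> \<one>\<^bsub>S\<^esub> \<otimes>\<^bsub>S\<^esub> (\<ominus>\<^bsub>S\<^esub> ?x)"
      using l_minus[OF one_closed a_inv_closed[OF xc]] xc by simp
    show ?thesis unfolding e
    proof
      assume "\<ominus>\<^bsub>S\<^esub> ?x \<in> Units S" then show "?x \<in> Units S" using m2 Units_minus_one_closed Units_m_closed by metis
    next
      assume "?x \<in> Units S" then show "\<ominus>\<^bsub>S\<^esub> ?x \<in> Units S" using m Units_minus_one_closed Units_m_closed by metis
    qed
  qed
qed

context tamb begin
lemma lcos_carrier_self: assumes g: "g \<in> carrier G" shows "g <# carrier G = carrier G"
proof
  show "g <# carrier G \<subseteq> carrier G" using l_coset_subset_G[OF subset_refl g] .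
  show "carrier G \<subseteq> g <# carrier G"
  proof
    fix y assume y: "y \<in> carrier G"
    have "y = g \<otimes> (inv g \<otimes> y)" using g y by (simp add: m_assoc[symmetric])
    then show "y \<in> g <# carrier G" using g y unfolding l_coset_def by blast
  qed
qed
end

lemma main:
  fixes G :: "('g, 'b) monoid_scheme"
    and R :: "'g gpt set \<Rightarrow> 'r ring"
    and res tr nm :: "'g gpt set \<Rightarrow> 'g gpt set \<Rightarrow> ('g gpt \<Rightarrow> 'g gpt) \<Rightarrow> 'r \<Rightarrow> 'r"
    and k :: int
  assumes "group G" and "finite (carrier G)"
    and "tambara_functor G R res tr nm"
  shows "(int_elem (R (orbit_set G (carrier G))) k \<in> Units (R (orbit_set G (carrier G)))
            \<longleftrightarrow> (\<forall>H. subgroup H G \<longrightarrow> int_elem (R (orbit_set G H)) k \<in> Units (R (orbit_set G H))))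
       \<and> ((\<forall>H. subgroup H G \<longrightarrow> int_elem (R (orbit_set G H)) k \<in> Units (R (orbit_set G H)))
            \<longleftrightarrow> int_elem (R (orbit_set G {\<one>\<^bsub>G\<^esub>})) k \<in> Units (R (orbit_set G {\<one>\<^bsub>G\<^esub>})))"
proof -
  have tm: "tamb G R res tr nm" using assms unfolding tamb_def tamb_axioms_def by blast
  interpret tamb G R res tr nm by (rule tm)
  let ?n = "nat \<bar>k\<bar>"
  let ?P = "\<lambda>H. add_pow (R (orbit_set G H)) ?n \<one>\<^bsub>R (orbit_set G H)\<^esub> \<in> Units (R (orbit_set G H))"
  have iff: "\<And>H. subgroup H G \<Longrightarrow> (int_elem (R (orbit_set G H)) k \<in> Units (R (orbit_set G H))) = ?P H"
    by (rule int_units[OF cr[OF orbit_set_gset]]) (rule subgroup.subset)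
  have top: "?P (carrier G) \<Longrightarrow> subgroup H G \<Longrightarrow> ?P H" for H
  proof -
    assume P: "?P (carrier G)" and H: "subgroup H G"
    have lc: "\<And>g. g \<in> carrier G \<Longrightarrow> l_coset G g (carrier G) = carrier G" by (rule lcos_carrier_self)
    have oc: "orbit_set G (carrier G) = {(0, carrier G)}" unfolding orbit_set_def using lc by auto
    let ?\<phi> = "\<lambda>u\<in>orbit_set G H. (0::nat, carrier G)"
    have gH: "gset G (orbit_set G H)" using orbit_set_gset[OF subgroup.subset[OF H]] .
    have gT: "gset G (orbit_set G (carrier G))" using orbit_set_gset by simp
    have m: "gmap G (orbit_set G H) (orbit_set G (carrier G)) ?\<phi>"
    proof (rule gmapI[OF gH gT])
      fix g x assume "g \<in> carrier G" "x \<in> orbit_set G H"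
      then show "?\<phi> (gact G g x) = gact G g (?\<phi> x)" using gsetD(2)[OF gH] lc by (simp add: gact_def)
    qed (use oc in auto)
    show "?P H" using res_units[OF m P] res_add_pow[OF m] by simp
  qed
  have bot: "?P {\<one>\<^bsub>G\<^esub>} \<Longrightarrow> subgroup H G \<Longrightarrow> ?P H" for H using all_subgroups[OF tm] by blast
  show ?thesis
    using iff top bot triv_subgroup subgroup_self by blast
qed

theorem mainTheorem1:
  fixes G :: "('g, 'b) monoid_scheme"
    and R :: "'g gpt set \<Rightarrow> 'r ring"
    and res tr nm :: "'g gpt set \<Rightarrow> 'g gpt set \<Rightarrow> ('g gpt \<Rightarrow> 'g gpt) \<Rightarrow> 'r \<Rightarrow> 'r"
    and k :: int
  assumes "group G" and "finite (carrier G)"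
    and "tambara_functor G R res tr nm"
  shows "(int_elem (R (orbit_set G (carrier G))) k \<in> Units (R (orbit_set G (carrier G)))
            \<longleftrightarrow> (\<forall>H. subgroup H G \<longrightarrow> int_elem (R (orbit_set G H)) k \<in> Units (R (orbit_set G H))))
       \<and> ((\<forall>H. subgroup H G \<longrightarrow> int_elem (R (orbit_set G H)) k \<in> Units (R (orbit_set G H)))
            \<longleftrightarrow> int_elem (R (orbit_set G {\<one>\<^bsub>G\<^esub>})) k \<in> Units (R (orbit_set G {\<one>\<^bsub>G\<^esub>})))"
  using main[OF assms] .

end
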